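(* For every hyperstonean locale $H$, the Boolean algebra $\mathrm{COpen}(H)$ of compact opens of $H$ is a localizable Boolean algebra, and for every localizable Boolean algebra $A$, the frame $\mathrm{Idl}(A)$ of ideals of $A$ is a hyperstonean locale. The adjoint equivalence between Stonean locales (with open maps) and the opposite of complete Boolean algebras (with supremum-preserving homomorphisms), given by $\mathrm{COpen}$ and $\mathrm{Ideal}$, restricts to an adjoint equivalence $\mathsf{HStoneanLoc}\simeq\mathsf{LBAlg}^{\mathrm{op}}=\mathsf{MLoc}$.
   Context: Frames, locales: a frame is a poset with finite meets and arbitrary joins, binary meets distributing over joins; locales are the opposite category; a locale map $f$ has frame homomorphism $f^*$. $x\to y=\sup\{w:w\wedge x\le y\}$, $\neg x=x\to0$. A locale map is open if $f^*$ preserves arbitrary meets and Heyting implications. Compact open $a$: $\bigvee S\ge a$ implies $\bigvee F\ge a$ for some finite $F\subset S$. Coherent: compact opens closed under finite meets (including top) and generate under joins; regular: $y=\bigvee\{x:\neg x\vee y=1\}$; extremally disconnected: $\neg x\vee\neg\neg x=1$. Stonean locale: coherent, regular, extremally disconnected. A continuous valuation $\nu:L\to[0,\infty)$: $\nu(0)=0$, modular, monotone, preserving directed suprema; normal if $\nu(\neg\neg a)=\nu(a)$. A hyperstonean locale is a Stonean locale such that for each $a\neq0$ there is a normal valuation $\nu$ with $\nu(a)\ne0$; $\mathsf{HStoneanLoc}$ has open locale maps as morphisms. A Boolean algebra $A$ is localizable if complete and $1$ is the supremum of all $a$ for which $\{b\le a\}$ admits a faithful continuous valuation; $\mathsf{LBAlg}$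 has supremum-preserving Boolean homomorphisms as morphisms. An ideal of a distributive lattice is a down-closed subset closed under finite joins; $\mathrm{Ideal}(A)$ is the locale whose frame is the set of ideals of $A$ ordered by inclusion. The unit $H\to\mathrm{Ideal}(\mathrm{COpen}(H))$ sends an ideal to its join, and $a\in A$ corresponds to its principal ideal. *)

theory Defs
  imports Main Complex_Main
begin

text \<open>Posets are represented as carrier sets inside a type with a partial order;
  all lattice operations are computed relative to the carrier.\<close>

definition p_is_lub :: "'a::order set \<Rightarrow> 'a set \<Rightarrow> 'a \<Rightarrow> bool" where
  "p_is_lub S X x \<longleftrightarrow> x \<in> S \<and> (\<forall>y\<in>X. y \<le> x) \<and> (\<forall>z\<in>S. (\<forall>y\<in>X. y \<le> z) \<longrightarrow> x \<le> z)"

definition p_is_glb :: "'a::order set \<Rightarrow> 'a set \<Rightarrow> 'a \<Rightarrow> bool" where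
  "p_is_glb S X x \<longleftrightarrow> x \<in> S \<and> (\<forall>y\<in>X. x \<le> y) \<and> (\<forall>z\<in>S. (\<forall>y\<in>X. z \<le> y) \<longrightarrow> z \<le> x)"

definition pjoin :: "'a::order set \<Rightarrow> 'a set \<Rightarrow> 'a" where
  "pjoin S X = (THE x. p_is_lub S X x)"

definition pmeet :: "'a::order set \<Rightarrow> 'a set \<Rightarrow> 'a" where
  "pmeet S X = (THE x. p_is_glb S X x)"

definition pjoin2 :: "'a::order set \<Rightarrow> 'a \<Rightarrow> 'a \<Rightarrow> 'a" where
  "pjoin2 S a b = pjoin S {a, b}"

definition pmeet2 :: "'a::order set \<Rightarrow> 'a \<Rightarrow> 'a \<Rightarrow> 'a" where
  "pmeet2 S a b = pmeet S {a, b}"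

definition ptop :: "'a::order set \<Rightarrow> 'a" where
  "ptop S = pmeet S {}"

definition pbot :: "'a::order set \<Rightarrow> 'a" where
  "pbot S = pjoin S {}"

definition complete_poset :: "'a::order set \<Rightarrow> bool" where
  "complete_poset S \<longleftrightarrow> (\<forall>X\<subseteq>S. \<exists>x. p_is_lub S X x)"

definition frame :: "'a::order set \<Rightarrow> bool" where
  "frame S \<longleftrightarrow> complete_poset S \<and>
     (\<forall>a\<in>S. \<forall>X\<subseteq>S. pmeet2 S a (pjoin S X) = pjoin S ((\<lambda>x. pmeet2 S a x) ` X))"

definition himp :: "'a::order set \<Rightarrow> 'a \<Rightarrow> 'a \<Rightarrow> 'a" where
  "himp S x y = pjoin S {w\<in>S. pmeet2 S w x \<le> y}"

definition pneg :: "'a::order set \<Rightarrow> 'a \<Rightarrow> 'a" where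
  "pneg S x = himp S x (pbot S)"

text \<open>Frame homomorphism S \<rightarrow> T: preserves finite meets and arbitrary joins.
  A locale map f : H \<rightarrow> H' is represented by its frame homomorphism f^* : H' \<rightarrow> H.\<close>
definition frame_hom :: "'a::order set \<Rightarrow> 'b::order set \<Rightarrow> ('a \<Rightarrow> 'b) \<Rightarrow> bool" where
  "frame_hom S T h \<longleftrightarrow> (\<forall>x\<in>S. h x \<in> T) \<and> h (ptop S) = ptop T \<and>
     (\<forall>a\<in>S. \<forall>b\<in>S. h (pmeet2 S a b) = pmeet2 T (h a) (h b)) \<and>
     (\<forall>X\<subseteq>S. h (pjoin S X) = pjoin T (h ` X))"

text \<open>f^* of an open locale map: additionally preserves arbitrary meets and Heyting implications.\<close>
definition open_frame_hom :: "'a::order set \<Rightarrow> 'b::order set \<Rightarrow> ('a \<Rightarrow> 'b) \<Rightarrow> bool" where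
  "open_frame_hom S T h \<longleftrightarrow> frame_hom S T h \<and>
     (\<forall>X\<subseteq>S. h (pmeet S X) = pmeet T (h ` X)) \<and>
     (\<forall>a\<in>S. \<forall>b\<in>S. h (himp S a b) = himp T (h a) (h b))"

definition compact_open :: "'a::order set \<Rightarrow> 'a \<Rightarrow> bool" where
  "compact_open S a \<longleftrightarrow> a \<in> S \<and>
     (\<forall>X\<subseteq>S. a \<le> pjoin S X \<longrightarrow> (\<exists>F\<subseteq>X. finite F \<and> a \<le> pjoin S F))"

definition COpen :: "'a::order set \<Rightarrow> 'a set" where
  "COpen S = {a. compact_open S a}"

definition coherent :: "'a::order set \<Rightarrow> bool" where
  "coherent S \<longleftrightarrow> ptop S \<in> COpen S \<and>
     (\<forall>a\<in>COpen S. \<forall>b\<in>COpen S. pmeet2 S a b \<in> COpen S) \<and>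
     (\<forall>x\<in>S. \<exists>C\<subseteq>COpen S. x = pjoin S C)"

definition regular_frame :: "'a::order set \<Rightarrow> bool" where
  "regular_frame S \<longleftrightarrow> (\<forall>y\<in>S. y = pjoin S {x\<in>S. pjoin2 S (pneg S x) y = ptop S})"

definition extremally_disconnected :: "'a::order set \<Rightarrow> bool" where
  "extremally_disconnected S \<longleftrightarrow> (\<forall>x\<in>S. pjoin2 S (pneg S x) (pneg S (pneg S x)) = ptop S)"

definition stonean :: "'a::order set \<Rightarrow> bool" where
  "stonean S \<longleftrightarrow> frame S \<and> coherent S \<and> regular_frame S \<and> extremally_disconnected S"

definition directed_in :: "'a::order set \<Rightarrow> 'a set \<Rightarrow> bool" where
  "directed_in S D \<longleftrightarrow> D \<subseteq> S \<and> D \<noteq> {} \<and> (\<forall>a\<in>D. \<forall>b\<in>D. \<exists>c\<in>D. a \<le> c \<and> b \<le> c)"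

definition cont_valuation :: "'a::order set \<Rightarrow> ('a \<Rightarrow> real) \<Rightarrow> bool" where
  "cont_valuation S \<nu> \<longleftrightarrow> (\<forall>x\<in>S. 0 \<le> \<nu> x) \<and> \<nu> (pbot S) = 0 \<and>
     (\<forall>a\<in>S. \<forall>b\<in>S. \<nu> (pjoin2 S a b) + \<nu> (pmeet2 S a b) = \<nu> a + \<nu> b) \<and>
     (\<forall>a\<in>S. \<forall>b\<in>S. a \<le> b \<longrightarrow> \<nu> a \<le> \<nu> b) \<and>
     (\<forall>D. directed_in S D \<longrightarrow> \<nu> (pjoin S D) = (SUP d\<in>D. \<nu> d))"

definition normal_valuation :: "'a::order set \<Rightarrow> ('a \<Rightarrow> real) \<Rightarrow> bool" where
  "normal_valuation S \<nu> \<longleftrightarrow> (\<forall>a\<in>S. \<nu> (pneg S (pneg S a)) = \<nu> a)"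

definition hyperstonean :: "'a::order set \<Rightarrow> bool" where
  "hyperstonean S \<longleftrightarrow> stonean S \<and>
     (\<forall>a\<in>S. a \<noteq> pbot S \<longrightarrow> (\<exists>\<nu>. cont_valuation S \<nu> \<and> normal_valuation S \<nu> \<and> \<nu> a \<noteq> 0))"

definition bool_alg :: "'a::order set \<Rightarrow> bool" where
  "bool_alg A \<longleftrightarrow>
     (\<forall>a\<in>A. \<forall>b\<in>A. (\<exists>x. p_is_lub A {a, b} x) \<and> (\<exists>x. p_is_glb A {a, b} x)) \<and>
     (\<exists>x. p_is_lub A {} x) \<and> (\<exists>x. p_is_glb A {} x) \<and>
     (\<forall>a\<in>A. \<forall>b\<in>A. \<forall>c\<in>A. pmeet2 A a (pjoin2 A b c) = pjoin2 A (pmeet2 A a b) (pmeet2 A a c)) \<and>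
     (\<forall>a\<in>A. \<exists>b\<in>A. pmeet2 A a b = pbot A \<and> pjoin2 A a b = ptop A)"

definition complete_bool_alg :: "'a::order set \<Rightarrow> bool" where
  "complete_bool_alg A \<longleftrightarrow> bool_alg A \<and> complete_poset A"

definition localizable :: "'a::order set \<Rightarrow> bool" where
  "localizable A \<longleftrightarrow> complete_bool_alg A \<and>
     ptop A = pjoin A {a\<in>A. \<exists>\<nu>. cont_valuation {b\<in>A. b \<le> a} \<nu> \<and>
                                  (\<forall>b\<in>A. b \<le> a \<longrightarrow> \<nu> b = 0 \<longrightarrow> b = pbot A)}"

definition bool_hom_sup :: "'a::order set \<Rightarrow> 'b::order set \<Rightarrow> ('a \<Rightarrow> 'b) \<Rightarrow> bool" where
  "bool_hom_sup A B h \<longleftrightarrow> (\<forall>a\<in>A. h a \<in> B) \<and>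
     h (ptop A) = ptop B \<and> h (pbot A) = pbot B \<and>
     (\<forall>a\<in>A. \<forall>b\<in>A. h (pmeet2 A a b) = pmeet2 B (h a) (h b)) \<and>
     (\<forall>a\<in>A. \<forall>b\<in>A. h (pjoin2 A a b) = pjoin2 B (h a) (h b)) \<and>
     (\<forall>X\<subseteq>A. h (pjoin A X) = pjoin B (h ` X))"

definition lat_ideal :: "'a::order set \<Rightarrow> 'a set \<Rightarrow> bool" where
  "lat_ideal A I \<longleftrightarrow> I \<subseteq> A \<and> (\<forall>x\<in>I. \<forall>y\<in>A. y \<le> x \<longrightarrow> y \<in> I) \<and>
     pbot A \<in> I \<and> (\<forall>x\<in>I. \<forall>y\<in>I. pjoin2 A x y \<in> I)"

definition Idl :: "'a::order set \<Rightarrow> 'a set set" where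
  "Idl A = {I. lat_ideal A I}"

text \<open>Action of Ideal on a morphism h : A \<rightarrow> B: the frame map Idl A \<rightarrow> Idl B sending an
  ideal to the ideal generated by its image (this is f^* of the locale map Ideal(B) \<rightarrow> Ideal(A)).\<close>
definition ideal_map :: "'a::order set \<Rightarrow> 'b::order set \<Rightarrow> ('a \<Rightarrow> 'b) \<Rightarrow> 'a set \<Rightarrow> 'b set" where
  "ideal_map A B h I = \<Inter>{J\<in>Idl B. h ` I \<subseteq> J}"

end

theory Submission
  imports Defs
begin


lemma lub_unique: "p_is_lub S X x \<Longrightarrow> p_is_lub S X y \<Longrightarrow> x = y"
  unfolding p_is_lub_def by (meson order_antisym)

lemma glb_unique: "p_is_glb S X x \<Longrightarrow> p_is_glb S X y \<Longrightarrow> x = y"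
  unfolding p_is_glb_def by (meson order_antisym)

lemma pjoin_eqI: "p_is_lub S X x \<Longrightarrow> pjoin S X = x"
  unfolding pjoin_def using lub_unique by (metis the_equality)

lemma pmeet_eqI: "p_is_glb S X x \<Longrightarrow> pmeet S X = x"
  unfolding pmeet_def using glb_unique by (metis the_equality)

lemma lubI: "x \<in> S \<Longrightarrow> (\<And>y. y \<in> X \<Longrightarrow> y \<le> x) \<Longrightarrow> (\<And>z. z \<in> S \<Longrightarrow> (\<forall>y\<in>X. y \<le> z) \<Longrightarrow> x \<le> z) \<Longrightarrow> p_is_lub S X x"
  unfolding p_is_lub_def by blast

lemma glbI: "x \<in> S \<Longrightarrow> (\<And>y. y \<in> X \<Longrightarrow> x \<le> y) \<Longrightarrow> (\<And>z. z \<in> S \<Longrightarrow> (\<forall>y\<in>X. z \<le> y) \<Longrightarrow> z \<le> x) \<Longrightarrow> p_is_glb S X x"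
  unfolding p_is_glb_def by blast

lemma pjoin_eqI2: "x \<in> S \<Longrightarrow> (\<And>y. y \<in> X \<Longrightarrow> y \<le> x) \<Longrightarrow> (\<And>z. z \<in> S \<Longrightarrow> (\<forall>y\<in>X. y \<le> z) \<Longrightarrow> x \<le> z) \<Longrightarrow> pjoin S X = x"
  by (rule pjoin_eqI, rule lubI)

lemma pmeet_eqI2: "x \<in> S \<Longrightarrow> (\<And>y. y \<in> X \<Longrightarrow> x \<le> y) \<Longrightarrow> (\<And>z. z \<in> S \<Longrightarrow> (\<forall>y\<in>X. z \<le> y) \<Longrightarrow> z \<le> x) \<Longrightarrow> pmeet S X = x"
  by (rule pmeet_eqI, rule glbI)

lemma pjoin_max: "x \<in> S \<Longrightarrow> x \<in> X \<Longrightarrow> (\<And>y. y \<in> X \<Longrightarrow> y \<le> x) \<Longrightarrow> pjoin S X = x"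
  by (rule pjoin_eqI2) auto

lemma sub_lub: "T \<subseteq> S \<Longrightarrow> p_is_lub S X x \<Longrightarrow> x \<in> T \<Longrightarrow> p_is_lub T X x"
  unfolding p_is_lub_def by blast

lemma sub_glb: "T \<subseteq> S \<Longrightarrow> p_is_glb S X x \<Longrightarrow> x \<in> T \<Longrightarrow> p_is_glb T X x"
  unfolding p_is_glb_def by blast

lemma complete_glb:
  assumes "complete_poset S" "X \<subseteq> S"
  shows "p_is_glb S X (pjoin S {z\<in>S. \<forall>y\<in>X. z \<le> y})"
proof -
  obtain x where x: "p_is_lub S {z\<in>S. \<forall>y\<in>X. z \<le> y} x"
    using assms unfolding complete_poset_def by (metis (no_types, lifting) mem_Collect_eq subsetI)
  hence e: "pjoin S {z\<in>S. \<forall>y\<in>X. z \<le> y} = x" by (rule pjoin_eqI)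
  show ?thesis unfolding e using x assms unfolding p_is_lub_def p_is_glb_def by blast
qed

locale cl =
  fixes S :: "'a::order set"
  assumes cpl: "complete_poset S"
begin

lemma lub: "X \<subseteq> S \<Longrightarrow> p_is_lub S X (pjoin S X)"
  using cpl unfolding complete_poset_def by (metis pjoin_eqI)

lemma glb: "X \<subseteq> S \<Longrightarrow> p_is_glb S X (pmeet S X)"
  using complete_glb[OF cpl] by (metis pmeet_eqI)

lemma J_in: "X \<subseteq> S \<Longrightarrow> pjoin S X \<in> S"
  using lub unfolding p_is_lub_def by blast
lemma J_ub: "X \<subseteq> S \<Longrightarrow> x \<in> X \<Longrightarrow> x \<le> pjoin S X"
  using lub unfolding p_is_lub_def by blast
lemma J_least: "X \<subseteq> S \<Longrightarrow> z \<in> S \<Longrightarrow> (\<And>x. x \<in> X \<Longrightarrow> x \<le> z) \<Longrightarrow> pjoin S X \<le> z"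
  using lub unfolding p_is_lub_def by blast
lemma J_le_iff: "X \<subseteq> S \<Longrightarrow> z \<in> S \<Longrightarrow> pjoin S X \<le> z \<longleftrightarrow> (\<forall>x\<in>X. x \<le> z)"
  by (meson J_least J_ub order_trans)
lemma J_mono: "X \<subseteq> Y \<Longrightarrow> Y \<subseteq> S \<Longrightarrow> pjoin S X \<le> pjoin S Y"
  by (meson J_in J_least J_ub subset_iff dual_order.trans)

lemma M_in: "X \<subseteq> S \<Longrightarrow> pmeet S X \<in> S"
  using glb unfolding p_is_glb_def by blast
lemma M_lb: "X \<subseteq> S \<Longrightarrow> x \<in> X \<Longrightarrow> pmeet S X \<le> x"
  using glb unfolding p_is_glb_def by blast
lemma M_greatest: "X \<subseteq> S \<Longrightarrow> z \<in> S \<Longrightarrow> (\<And>x. x \<in> X \<Longrightarrow> z \<le> x) \<Longrightarrow> z \<le> pmeet S X"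
  using glb unfolding p_is_glb_def by blast
lemma M_ge_iff: "X \<subseteq> S \<Longrightarrow> z \<in> S \<Longrightarrow> z \<le> pmeet S X \<longleftrightarrow> (\<forall>x\<in>X. z \<le> x)"
  by (meson M_greatest M_lb order_trans)

lemma j2_in: "a \<in> S \<Longrightarrow> b \<in> S \<Longrightarrow> pjoin2 S a b \<in> S"
  unfolding pjoin2_def by (rule J_in) auto
lemma j2_le_iff: "a \<in> S \<Longrightarrow> b \<in> S \<Longrightarrow> z \<in> S \<Longrightarrow> pjoin2 S a b \<le> z \<longleftrightarrow> a \<le> z \<and> b \<le> z"
  unfolding pjoin2_def by (subst J_le_iff) auto
lemma j2_ub1: "a \<in> S \<Longrightarrow> b \<in> S \<Longrightarrow> a \<le> pjoin2 S a b"
  using j2_le_iff j2_in by blast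
lemma j2_ub2: "a \<in> S \<Longrightarrow> b \<in> S \<Longrightarrow> b \<le> pjoin2 S a b"
  using j2_le_iff j2_in by blast
lemma m2_in: "a \<in> S \<Longrightarrow> b \<in> S \<Longrightarrow> pmeet2 S a b \<in> S"
  unfolding pmeet2_def by (rule M_in) auto
lemma le_m2_iff: "a \<in> S \<Longrightarrow> b \<in> S \<Longrightarrow> z \<in> S \<Longrightarrow> z \<le> pmeet2 S a b \<longleftrightarrow> z \<le> a \<and> z \<le> b"
  unfolding pmeet2_def by (subst M_ge_iff) auto
lemma m2_lb1: "a \<in> S \<Longrightarrow> b \<in> S \<Longrightarrow> pmeet2 S a b \<le> a"
  using le_m2_iff m2_in by blast
lemma m2_lb2: "a \<in> S \<Longrightarrow> b \<in> S \<Longrightarrow> pmeet2 S a b \<le> b"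
  using le_m2_iff m2_in by blast

lemma top_in: "ptop S \<in> S"
  unfolding ptop_def by (rule M_in) auto
lemma le_top: "x \<in> S \<Longrightarrow> x \<le> ptop S"
  unfolding ptop_def by (rule M_greatest) auto
lemma bot_in: "pbot S \<in> S"
  unfolding pbot_def by (rule J_in) auto
lemma bot_le: "x \<in> S \<Longrightarrow> pbot S \<le> x"
  unfolding pbot_def by (rule J_least) auto

lemma m2_comm: "pmeet2 S a b = pmeet2 S b a"
  unfolding pmeet2_def by (simp add: insert_commute)
lemma j2_comm: "pjoin2 S a b = pjoin2 S b a"
  unfolding pjoin2_def by (simp add: insert_commute)

lemma m2_mono: "a \<in> S \<Longrightarrow> b \<in> S \<Longrightarrow> c \<in> S \<Longrightarrow> d \<in> S \<Longrightarrow> a \<le> c \<Longrightarrow> b \<le> d \<Longrightarrow> pmeet2 S a b \<le> pmeet2 S c d"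
  by (meson le_m2_iff m2_in m2_lb1 m2_lb2 order_trans)
lemma j2_mono: "a \<in> S \<Longrightarrow> b \<in> S \<Longrightarrow> c \<in> S \<Longrightarrow> d \<in> S \<Longrightarrow> a \<le> c \<Longrightarrow> b \<le> d \<Longrightarrow> pjoin2 S a b \<le> pjoin2 S c d"
  by (meson j2_le_iff j2_in j2_ub1 j2_ub2 order_trans)

lemma m2_eq1: "a \<in> S \<Longrightarrow> b \<in> S \<Longrightarrow> a \<le> b \<Longrightarrow> pmeet2 S a b = a"
  by (meson antisym le_m2_iff m2_in m2_lb1 order_refl)
lemma m2_eq2: "a \<in> S \<Longrightarrow> b \<in> S \<Longrightarrow> b \<le> a \<Longrightarrow> pmeet2 S a b = b"
  using m2_eq1 m2_comm by metis
lemma j2_eq1: "a \<in> S \<Longrightarrow> b \<in> S \<Longrightarrow> b \<le> a \<Longrightarrow> pjoin2 S a b = a"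
  by (meson antisym j2_le_iff j2_in j2_ub1 order_refl)
lemma j2_eq2: "a \<in> S \<Longrightarrow> b \<in> S \<Longrightarrow> a \<le> b \<Longrightarrow> pjoin2 S a b = b"
  using j2_eq1 j2_comm by metis

lemma le_bot_iff: "x \<in> S \<Longrightarrow> x \<le> pbot S \<longleftrightarrow> x = pbot S"
  using bot_le bot_in antisym by blast
lemma top_le_iff: "x \<in> S \<Longrightarrow> ptop S \<le> x \<longleftrightarrow> x = ptop S"
  using le_top top_in antisym by blast

lemma J_insert: "x \<in> S \<Longrightarrow> F \<subseteq> S \<Longrightarrow> pjoin S (insert x F) = pjoin2 S x (pjoin S F)"
  apply (rule antisym)
   apply (rule J_least; auto simp: j2_in J_in j2_ub1)
   apply (meson J_in J_ub j2_in j2_ub2 order_trans)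
  by (simp add: J_in J_ub J_mono j2_le_iff subset_insertI)

lemma J_empty_bot: "pjoin S {} = pbot S" unfolding pbot_def ..

lemma J_union: "X \<subseteq> S \<Longrightarrow> Y \<subseteq> S \<Longrightarrow> pjoin S (X \<union> Y) = pjoin2 S (pjoin S X) (pjoin S Y)"
  apply (rule antisym)
   apply (rule J_least; auto simp: j2_in J_in)
    apply (meson J_in J_ub j2_in j2_ub1 order_trans)
   apply (meson J_in J_ub j2_in j2_ub2 order_trans)
  by (simp add: J_in J_mono j2_le_iff)

end



context cl begin
lemma m2_bot: "x \<in> S \<Longrightarrow> pmeet2 S x (pbot S) = pbot S"
  by (simp add: bot_in bot_le m2_eq2)
lemma j2_bot: "x \<in> S \<Longrightarrow> pjoin2 S (pbot S) x = x"
  by (simp add: bot_in bot_le j2_eq2)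
lemma m2_top: "x \<in> S \<Longrightarrow> pmeet2 S x (ptop S) = x"
  by (simp add: top_in le_top m2_eq1)

end

locale frm = cl +
  assumes dist: "a \<in> S \<Longrightarrow> X \<subseteq> S \<Longrightarrow> pmeet2 S a (pjoin S X) = pjoin S ((\<lambda>x. pmeet2 S a x) ` X)"
begin

lemma dist2: "a \<in> S \<Longrightarrow> b \<in> S \<Longrightarrow> c \<in> S \<Longrightarrow> pmeet2 S a (pjoin2 S b c) = pjoin2 S (pmeet2 S a b) (pmeet2 S a c)"
  unfolding pjoin2_def[of S b c] using dist[of a "{b,c}"] by (simp add: pjoin2_def)

lemma m2_assoc: assumes "a \<in> S" "b \<in> S" "c \<in> S" shows "pmeet2 S (pmeet2 S a b) c = pmeet2 S a (pmeet2 S b c)"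
proof -
  have i: "z \<le> pmeet2 S (pmeet2 S a b) c \<longleftrightarrow> z \<le> pmeet2 S a (pmeet2 S b c)" if "z \<in> S" for z
    using assms that by (simp add: le_m2_iff m2_in)
  show ?thesis using i[of "pmeet2 S (pmeet2 S a b) c"] i[of "pmeet2 S a (pmeet2 S b c)"] assms
    by (simp add: m2_in antisym)
qed

lemma j2_assoc: assumes "a \<in> S" "b \<in> S" "c \<in> S" shows "pjoin2 S (pjoin2 S a b) c = pjoin2 S a (pjoin2 S b c)"
proof -
  have i: "pjoin2 S (pjoin2 S a b) c \<le> z \<longleftrightarrow> pjoin2 S a (pjoin2 S b c) \<le> z" if "z \<in> S" for z
    using assms that by (simp add: j2_le_iff j2_in)
  show ?thesis using i[of "pjoin2 S (pjoin2 S a b) c"] i[of "pjoin2 S a (pjoin2 S b c)"] assms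
    by (simp add: j2_in antisym)
qed

lemma m2_idem: "a \<in> S \<Longrightarrow> pmeet2 S a a = a" using m2_eq1 by auto

lemma himp_char: assumes "w \<in> S" "x \<in> S" "y \<in> S"
  shows "w \<le> himp S x y \<longleftrightarrow> pmeet2 S w x \<le> y"
proof
  let ?W = "{w\<in>S. pmeet2 S w x \<le> y}"
  have WS: "?W \<subseteq> S" by auto
  have JW: "pjoin S ?W \<in> S" using J_in WS by blast
  assume "w \<le> himp S x y"
  hence "w \<le> pjoin S ?W" unfolding himp_def .
  hence "pmeet2 S w x \<le> pmeet2 S (pjoin S ?W) x"
    using assms JW by (intro m2_mono) auto
  also have "\<dots> = pmeet2 S x (pjoin S ?W)" by (rule m2_comm)
  also have "\<dots> = pjoin S ((\<lambda>v. pmeet2 S x v) ` ?W)" using dist assms WS by blast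
  also have "\<dots> \<le> y"
  proof (rule J_least)
    show "(\<lambda>v. pmeet2 S x v) ` ?W \<subseteq> S" using assms m2_in by auto
    show "y \<in> S" by fact
    fix z assume "z \<in> (\<lambda>v. pmeet2 S x v) ` ?W"
    then obtain v where "v \<in> ?W" "z = pmeet2 S x v" by blast
    thus "z \<le> y" using m2_comm[of x v] by simp
  qed
  finally show "pmeet2 S w x \<le> y" .
next
  assume "pmeet2 S w x \<le> y"
  thus "w \<le> himp S x y" unfolding himp_def using assms by (intro J_ub) auto
qed

lemma himp_in: "himp S x y \<in> S" unfolding himp_def by (rule J_in) auto

lemma pneg_in: "pneg S x \<in> S" unfolding pneg_def by (rule himp_in)

lemma pneg_char: "w \<in> S \<Longrightarrow> x \<in> S \<Longrightarrow> w \<le> pneg S x \<longleftrightarrow> pmeet2 S w x = pbot S"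
  unfolding pneg_def by (simp add: himp_char bot_in le_bot_iff m2_in)

lemma pneg_meet: "x \<in> S \<Longrightarrow> pmeet2 S (pneg S x) x = pbot S"
  using pneg_char pneg_in by blast
lemma pneg_meet': "x \<in> S \<Longrightarrow> pmeet2 S x (pneg S x) = pbot S"
  using pneg_meet m2_comm by metis

lemma pneg_anti: "x \<in> S \<Longrightarrow> y \<in> S \<Longrightarrow> x \<le> y \<Longrightarrow> pneg S y \<le> pneg S x"
proof -
  assume a: "x \<in> S" "y \<in> S" "x \<le> y"
  have "pmeet2 S (pneg S y) x \<le> pmeet2 S (pneg S y) y" using a pneg_in by (intro m2_mono) auto
  also have "\<dots> = pbot S" using pneg_meet a by blast
  finally show ?thesis using a pneg_char pneg_in le_bot_iff m2_in by blast
qed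

lemma le_nn: "x \<in> S \<Longrightarrow> x \<le> pneg S (pneg S x)"
  using pneg_char pneg_in pneg_meet' by blast

lemma neg_bot: "pneg S (pbot S) = ptop S"
proof -
  have "pmeet2 S (ptop S) (pbot S) = pbot S" using m2_lb2 top_in bot_in le_bot_iff m2_in by blast
  hence "ptop S \<le> pneg S (pbot S)" using pneg_char top_in bot_in by blast
  thus ?thesis using pneg_in top_le_iff by blast
qed

definition compl :: "'a \<Rightarrow> bool" where
  "compl c \<longleftrightarrow> c \<in> S \<and> (\<exists>d\<in>S. pmeet2 S c d = pbot S \<and> pjoin2 S c d = ptop S)"

lemma compl_neg:
  assumes "c \<in> S" "d \<in> S" "pmeet2 S c d = pbot S" "pjoin2 S c d = ptop S"
  shows "d = pneg S c"
proof (rule antisym)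
  show "d \<le> pneg S c" using assms pneg_char m2_comm by metis
  have "pneg S c = pmeet2 S (pneg S c) (pjoin2 S c d)" using assms m2_top pneg_in by simp
  also have "\<dots> = pjoin2 S (pmeet2 S (pneg S c) c) (pmeet2 S (pneg S c) d)"
    using dist2 assms pneg_in by blast
  also have "\<dots> = pmeet2 S (pneg S c) d" using pneg_meet assms j2_bot m2_in pneg_in by simp
  also have "\<dots> \<le> d" using m2_lb2 assms pneg_in by blast
  finally show "pneg S c \<le> d" .
qed

lemma compl_nn: assumes "compl c" shows "pneg S (pneg S c) = c"
proof -
  obtain d where d: "c \<in> S" "d \<in> S" "pmeet2 S c d = pbot S" "pjoin2 S c d = ptop S"
    using assms unfolding compl_def by blast
  have 1: "d = pneg S c" using compl_neg d by blast
  have "c = pneg S d" using compl_neg[of d c] d m2_comm j2_comm by metis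
  thus ?thesis using 1 by simp
qed

lemma compl_negI: assumes "compl c" shows "compl (pneg S c)"
proof -
  obtain d where d: "c \<in> S" "d \<in> S" "pmeet2 S c d = pbot S" "pjoin2 S c d = ptop S"
    using assms unfolding compl_def by blast
  have 1: "d = pneg S c" using compl_neg d by blast
  show ?thesis unfolding compl_def using d 1 m2_comm j2_comm pneg_in by metis
qed

lemma compl_join_neg: "compl c \<Longrightarrow> pjoin2 S c (pneg S c) = ptop S"
  unfolding compl_def using compl_neg by blast

end

lemma frame_frm: "frame S \<Longrightarrow> frm S"
  unfolding frame_def frm_def frm_axioms_def cl_def by blast

lemma frm_frame: "frm S \<Longrightarrow> frame S"
  unfolding frame_def frm_def frm_axioms_def cl_def by blast

locale cba = cl +
  assumes cba_dist: "a \<in> S \<Longrightarrow> b \<in> S \<Longrightarrow> c \<in> S \<Longrightarrow> pmeet2 S a (pjoin2 S b c) = pjoin2 S (pmeet2 S a b) (pmeet2 S a c)"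
    and cba_compl: "a \<in> S \<Longrightarrow> \<exists>b\<in>S. pmeet2 S a b = pbot S \<and> pjoin2 S a b = ptop S"

lemma cba_iff: "complete_bool_alg S \<longleftrightarrow> cba S"
proof
  assume "complete_bool_alg S" thus "cba S"
    unfolding complete_bool_alg_def bool_alg_def cba_def cba_axioms_def cl_def by blast
next
  assume c: "cba S"
  then interpret cba S .
  have "p_is_lub S {a,b} (pjoin2 S a b)" if "a \<in> S" "b \<in> S" for a b
    unfolding pjoin2_def using that by (intro lub) auto
  moreover have "p_is_glb S {a,b} (pmeet2 S a b)" if "a \<in> S" "b \<in> S" for a b
    unfolding pmeet2_def using that by (intro glb) auto
  moreover have "p_is_lub S {} (pbot S)" unfolding pbot_def by (intro lub) auto
  moreover have "p_is_glb S {} (ptop S)" unfolding ptop_def by (intro glb) auto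
  ultimately show "complete_bool_alg S"
    unfolding complete_bool_alg_def bool_alg_def using cpl cba_dist cba_compl by blast
qed

context cba
begin

lemma cba_frm: "frm S"
proof -
  have "pmeet2 S a (pjoin S X) = pjoin S ((\<lambda>x. pmeet2 S a x) ` X)" if a: "a \<in> S" and X: "X \<subseteq> S" for a X
  proof -
    obtain na where na: "na \<in> S" "pmeet2 S a na = pbot S" "pjoin2 S a na = ptop S"
      using cba_compl a by blast
    let ?Y = "(\<lambda>x. pmeet2 S a x) ` X"
    have YS: "?Y \<subseteq> S" using X a m2_in by auto
    let ?u = "pjoin S ?Y"
    have u: "?u \<in> S" using J_in YS .
    have JX: "pjoin S X \<in> S" using J_in X .
    have "x \<le> pjoin2 S ?u na" if x: "x \<in> X" for x
    proof -
      have xS: "x \<in> S" using x X by auto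
      have "x = pmeet2 S x (pjoin2 S a na)" using na m2_top xS by simp
      also have "\<dots> = pjoin2 S (pmeet2 S x a) (pmeet2 S x na)" using cba_dist xS a na by blast
      also have "\<dots> \<le> pjoin2 S ?u na"
      proof (rule j2_mono)
        show "pmeet2 S x a \<in> S" "pmeet2 S x na \<in> S" using xS a na m2_in by auto
        show "?u \<in> S" "na \<in> S" using u na by auto
        have "pmeet2 S a x \<in> ?Y" using x by blast
        hence "pmeet2 S a x \<le> ?u" using J_ub YS by blast
        thus "pmeet2 S x a \<le> ?u" using m2_comm[of x a] by simp
        show "pmeet2 S x na \<le> na" using m2_lb2 na xS by blast
      qed
      finally show ?thesis .
    qed
    hence "pjoin S X \<le> pjoin2 S ?u na" using J_least X j2_in u na by blast
    hence "pmeet2 S a (pjoin S X) \<le> pmeet2 S a (pjoin2 S ?u na)"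
      using a JX j2_in u na by (intro m2_mono) auto
    also have "\<dots> = pjoin2 S (pmeet2 S a ?u) (pmeet2 S a na)" using cba_dist a u na by blast
    also have "\<dots> = pjoin2 S (pmeet2 S a ?u) (pbot S)" using na by simp
    also have "\<dots> = pmeet2 S a ?u" using j2_eq1 bot_le bot_in m2_in a u by blast
    also have "\<dots> \<le> ?u" using m2_lb2 a u by blast
    finally have le: "pmeet2 S a (pjoin S X) \<le> ?u" .
    have ge: "?u \<le> pmeet2 S a (pjoin S X)"
    proof (rule J_least[OF YS])
      show "pmeet2 S a (pjoin S X) \<in> S" using a JX m2_in by blast
      fix y assume "y \<in> ?Y"
      then obtain x where x: "x \<in> X" "y = pmeet2 S a x" by blast
      have "x \<le> pjoin S X" using J_ub X x by blast
      hence "pmeet2 S a x \<le> pmeet2 S a (pjoin S X)" using x a X JX by (intro m2_mono) auto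
      thus "y \<le> pmeet2 S a (pjoin S X)" using x by simp
    qed
    show ?thesis using le ge by (rule antisym)
  qed
  thus ?thesis unfolding frm_def frm_axioms_def using cl_axioms by blast
qed

sublocale frm S by (rule cba_frm)

lemma all_compl: "a \<in> S \<Longrightarrow> compl a"
  unfolding compl_def using cba_compl by blast

lemma nn: "a \<in> S \<Longrightarrow> pneg S (pneg S a) = a"
  using all_compl compl_nn by blast

lemma join_neg: "a \<in> S \<Longrightarrow> pjoin2 S a (pneg S a) = ptop S"
  using all_compl compl_join_neg by blast

end



section \<open>order isomorphisms\<close>

definition oiso :: "'a::order set \<Rightarrow> 'b::order set \<Rightarrow> ('a \<Rightarrow> 'b) \<Rightarrow> bool" where
  "oiso S T f \<longleftrightarrow> bij_betw f S T \<and> (\<forall>x\<in>S. \<forall>y\<in>S. f x \<le> f y \<longleftrightarrow> x \<le> y)"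

lemma oiso_lub:
  assumes o: "oiso S T f" and X: "X \<subseteq> S" and x: "x \<in> S"
  shows "p_is_lub T (f ` X) (f x) \<longleftrightarrow> p_is_lub S X x"
proof -
  have T: "T = f ` S" and le: "\<And>x y. x \<in> S \<Longrightarrow> y \<in> S \<Longrightarrow> f x \<le> f y \<longleftrightarrow> x \<le> y"
    using o unfolding oiso_def bij_betw_def by auto
  show ?thesis
  proof
    assume l: "p_is_lub T (f ` X) (f x)"
    show "p_is_lub S X x"
    proof (rule lubI)
      show "x \<in> S" by fact
      fix y assume "y \<in> X" thus "y \<le> x" using l le X x unfolding p_is_lub_def by auto
    next
      fix z assume z: "z \<in> S" "\<forall>y\<in>X. y \<le> z"
      hence "\<forall>y\<in>f ` X. y \<le> f z" using le X by auto
      thus "x \<le> z" using l z le x T unfolding p_is_lub_def by auto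
    qed
  next
    assume l: "p_is_lub S X x"
    show "p_is_lub T (f ` X) (f x)"
    proof (rule lubI)
      show "f x \<in> T" using x T by auto
      fix y assume "y \<in> f ` X" thus "y \<le> f x" using l le X x unfolding p_is_lub_def by auto
    next
      fix z assume z: "z \<in> T" "\<forall>y\<in>f ` X. y \<le> z"
      then obtain z' where z': "z' \<in> S" "z = f z'" using T by auto
      hence "\<forall>y\<in>X. y \<le> z'" using z le X by auto
      thus "f x \<le> z" using l z' le x unfolding p_is_lub_def by auto
    qed
  qed
qed

lemma oiso_glb:
  assumes o: "oiso S T f" and X: "X \<subseteq> S" and x: "x \<in> S"
  shows "p_is_glb T (f ` X) (f x) \<longleftrightarrow> p_is_glb S X x"
proof -
  have T: "T = f ` S" and le: "\<And>x y. x \<in> S \<Longrightarrow> y \<in> S \<Longrightarrow> f x \<le> f y \<longleftrightarrow> x \<le> y"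
    using o unfolding oiso_def bij_betw_def by auto
  show ?thesis
  proof
    assume l: "p_is_glb T (f ` X) (f x)"
    show "p_is_glb S X x"
    proof (rule glbI)
      show "x \<in> S" by fact
      fix y assume "y \<in> X" thus "x \<le> y" using l le X x unfolding p_is_glb_def by auto
    next
      fix z assume z: "z \<in> S" "\<forall>y\<in>X. z \<le> y"
      hence "\<forall>y\<in>f ` X. f z \<le> y" using le X by auto
      thus "z \<le> x" using l z le x T unfolding p_is_glb_def by auto
    qed
  next
    assume l: "p_is_glb S X x"
    show "p_is_glb T (f ` X) (f x)"
    proof (rule glbI)
      show "f x \<in> T" using x T by auto
      fix y assume "y \<in> f ` X" thus "f x \<le> y" using l le X x unfolding p_is_glb_def by auto
    next
      fix z assume z: "z \<in> T" "\<forall>y\<in>f ` X. z \<le> y"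
      then obtain z' where z': "z' \<in> S" "z = f z'" using T by auto
      hence "\<forall>y\<in>X. z' \<le> y" using z le X by auto
      thus "z \<le> f x" using l z' le x unfolding p_is_glb_def by auto
    qed
  qed
qed

lemma oiso_complete:
  assumes o: "oiso S T f" and c: "complete_poset S"
  shows "complete_poset T"
  unfolding complete_poset_def
proof (intro allI impI)
  fix Y assume Y: "Y \<subseteq> T"
  have T: "T = f ` S" using o unfolding oiso_def bij_betw_def by auto
  define X where "X = {x\<in>S. f x \<in> Y}"
  have XS: "X \<subseteq> S" and YX: "Y = f ` X" using Y T unfolding X_def by auto
  interpret cl S by unfold_locales (rule c)
  have "p_is_lub T Y (f (pjoin S X))" unfolding YX using oiso_lub[OF o XS J_in[OF XS]] lub[OF XS] by blast
  thus "\<exists>x. p_is_lub T Y x" by blast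
qed

lemma oiso_complete_rev:
  assumes o: "oiso S T f" and c: "complete_poset T"
  shows "complete_poset S"
  unfolding complete_poset_def
proof (intro allI impI)
  fix X assume X: "X \<subseteq> S"
  have T: "T = f ` S" using o unfolding oiso_def bij_betw_def by auto
  obtain y where y: "p_is_lub T (f ` X) y" using c X T unfolding complete_poset_def by blast
  then obtain x where x: "x \<in> S" "y = f x" using T unfolding p_is_lub_def by auto
  thus "\<exists>x. p_is_lub S X x" using oiso_lub[OF o X x(1)] y by blast
qed

lemma oiso_pjoin:
  assumes o: "oiso S T f" and c: "complete_poset S" and X: "X \<subseteq> S"
  shows "f (pjoin S X) = pjoin T (f ` X)"
proof -
  interpret cl S by unfold_locales (rule c)
  show ?thesis using oiso_lub[OF o X J_in[OF X]] lub[OF X] pjoin_eqI by metis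
qed

lemma oiso_pmeet:
  assumes o: "oiso S T f" and c: "complete_poset S" and X: "X \<subseteq> S"
  shows "f (pmeet S X) = pmeet T (f ` X)"
proof -
  interpret cl S by unfold_locales (rule c)
  show ?thesis using oiso_glb[OF o X M_in[OF X]] glb[OF X] pmeet_eqI by metis
qed

lemma oiso_in: "oiso S T f \<Longrightarrow> x \<in> S \<Longrightarrow> f x \<in> T"
  unfolding oiso_def bij_betw_def by auto

lemma oiso_open:
  assumes o: "oiso S T f" and c: "complete_poset S"
  shows "open_frame_hom S T f"
proof -
  interpret cl S by unfold_locales (rule c)
  have T: "T = f ` S" and le: "\<And>x y. x \<in> S \<Longrightarrow> y \<in> S \<Longrightarrow> f x \<le> f y \<longleftrightarrow> x \<le> y"
    using o unfolding oiso_def bij_betw_def by auto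
  have pj: "\<And>X. X \<subseteq> S \<Longrightarrow> f (pjoin S X) = pjoin T (f ` X)" using oiso_pjoin[OF o c] by blast
  have pm: "\<And>X. X \<subseteq> S \<Longrightarrow> f (pmeet S X) = pmeet T (f ` X)" using oiso_pmeet[OF o c] by blast
  have m2: "f (pmeet2 S a b) = pmeet2 T (f a) (f b)" if "a \<in> S" "b \<in> S" for a b
    unfolding pmeet2_def using pm[of "{a,b}"] that by auto
  have "f (himp S a b) = himp T (f a) (f b)" if ab: "a \<in> S" "b \<in> S" for a b
  proof -
    let ?W = "{w\<in>S. pmeet2 S w a \<le> b}"
    have "f ` ?W = {w\<in>T. pmeet2 T w (f a) \<le> f b}"
    proof
      show "f ` ?W \<subseteq> {w\<in>T. pmeet2 T w (f a) \<le> f b}"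
      proof
        fix w assume "w \<in> f ` ?W"
        then obtain v where v: "v \<in> S" "pmeet2 S v a \<le> b" "w = f v" by blast
        have "f (pmeet2 S v a) \<le> f b" using le v m2_in ab by blast
        thus "w \<in> {w\<in>T. pmeet2 T w (f a) \<le> f b}" using v m2[of v a] ab T by auto
      qed
      show "{w\<in>T. pmeet2 T w (f a) \<le> f b} \<subseteq> f ` ?W"
      proof
        fix w assume w: "w \<in> {w\<in>T. pmeet2 T w (f a) \<le> f b}"
        then obtain v where v: "v \<in> S" "w = f v" using T by auto
        hence "f (pmeet2 S v a) \<le> f b" using w m2 ab by auto
        hence "pmeet2 S v a \<le> b" using le m2_in v ab by blast
        thus "w \<in> f ` ?W" using v by auto
      qed
    qed
    thus ?thesis unfolding himp_def using pj[of ?W] by auto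
  qed
  moreover have "f (ptop S) = ptop T" unfolding ptop_def using pm[of "{}"] by simp
  moreover have "\<forall>X\<subseteq>S. f (pjoin S X) = pjoin T (f ` X)" using pj by blast
  moreover have "\<forall>X\<subseteq>S. f (pmeet S X) = pmeet T (f ` X)" using pm by blast
  ultimately show ?thesis unfolding open_frame_hom_def frame_hom_def using m2 T by auto
qed

lemma oiso_bool_hom:
  assumes o: "oiso S T f" and c: "complete_poset S"
  shows "bool_hom_sup S T f"
proof -
  have T: "T = f ` S" using o unfolding oiso_def bij_betw_def by auto
  have pj: "\<And>X. X \<subseteq> S \<Longrightarrow> f (pjoin S X) = pjoin T (f ` X)" using oiso_pjoin[OF o c] by blast
  have pm: "\<And>X. X \<subseteq> S \<Longrightarrow> f (pmeet S X) = pmeet T (f ` X)" using oiso_pmeet[OF o c] by blast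
  show ?thesis unfolding bool_hom_sup_def pmeet2_def pjoin2_def ptop_def pbot_def
    using pj pm T by auto
qed

lemma oiso_inv:
  assumes o: "oiso S T f" and g: "\<And>x. x \<in> S \<Longrightarrow> g (f x) = x"
  shows "oiso T S g"
proof -
  have T: "T = f ` S" and le: "\<And>x y. x \<in> S \<Longrightarrow> y \<in> S \<Longrightarrow> f x \<le> f y \<longleftrightarrow> x \<le> y"
    and inj: "inj_on f S"
    using o unfolding oiso_def bij_betw_def by auto
  have "inj_on g T" unfolding T inj_on_def using g by auto
  moreover have "g ` T = S" unfolding T using g by force
  moreover have "\<forall>x\<in>T. \<forall>y\<in>T. g x \<le> g y \<longleftrightarrow> x \<le> y" unfolding T using g le by auto
  ultimately show ?thesis unfolding oiso_def bij_betw_def by blast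
qed

lemma ofhD:
  assumes "open_frame_hom S T f"
  shows "\<And>x. x \<in> S \<Longrightarrow> f x \<in> T" "f (ptop S) = ptop T"
    "\<And>a b. a \<in> S \<Longrightarrow> b \<in> S \<Longrightarrow> f (pmeet2 S a b) = pmeet2 T (f a) (f b)"
    "\<And>X. X \<subseteq> S \<Longrightarrow> f (pjoin S X) = pjoin T (f ` X)"
    "\<And>X. X \<subseteq> S \<Longrightarrow> f (pmeet S X) = pmeet T (f ` X)"
    "\<And>a b. a \<in> S \<Longrightarrow> b \<in> S \<Longrightarrow> f (himp S a b) = himp T (f a) (f b)"
  using assms unfolding open_frame_hom_def frame_hom_def by simp_all

lemma ofhI:
  assumes "\<And>x. x \<in> S \<Longrightarrow> f x \<in> T" "f (ptop S) = ptop T"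
    "\<And>a b. a \<in> S \<Longrightarrow> b \<in> S \<Longrightarrow> f (pmeet2 S a b) = pmeet2 T (f a) (f b)"
    "\<And>X. X \<subseteq> S \<Longrightarrow> f (pjoin S X) = pjoin T (f ` X)"
    "\<And>X. X \<subseteq> S \<Longrightarrow> f (pmeet S X) = pmeet T (f ` X)"
    "\<And>a b. a \<in> S \<Longrightarrow> b \<in> S \<Longrightarrow> f (himp S a b) = himp T (f a) (f b)"
  shows "open_frame_hom S T f"
  using assms unfolding open_frame_hom_def frame_hom_def by simp

lemma fhD:
  assumes "frame_hom S T f"
  shows "\<And>x. x \<in> S \<Longrightarrow> f x \<in> T" "f (ptop S) = ptop T"
    "\<And>a b. a \<in> S \<Longrightarrow> b \<in> S \<Longrightarrow> f (pmeet2 S a b) = pmeet2 T (f a) (f b)"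
    "\<And>X. X \<subseteq> S \<Longrightarrow> f (pjoin S X) = pjoin T (f ` X)"
  using assms unfolding frame_hom_def by simp_all

lemma open_compose:
  assumes f: "open_frame_hom S T f" and g: "open_frame_hom T U g"
  shows "open_frame_hom S U (\<lambda>x. g (f x))"
proof -
  note f1 = ofhD[OF f] and g1 = ofhD[OF g]
  have fX: "\<And>X. X \<subseteq> S \<Longrightarrow> f ` X \<subseteq> T" using f1(1) by blast
  have im: "\<And>X. (\<lambda>x. g (f x)) ` X = g ` (f ` X)" by auto
  show ?thesis
  proof (rule ofhI)
    show "\<And>x. x \<in> S \<Longrightarrow> g (f x) \<in> U" using f1 g1 by blast
    show "g (f (ptop S)) = ptop U" using f1 g1 by simp
    show "\<And>a b. a \<in> S \<Longrightarrow> b \<in> S \<Longrightarrow> g (f (pmeet2 S a b)) = pmeet2 U (g (f a)) (g (f b))"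
      using f1 g1 by simp
    show "\<And>X. X \<subseteq> S \<Longrightarrow> g (f (pjoin S X)) = pjoin U ((\<lambda>x. g (f x)) ` X)"
      using f1 g1 fX im by simp
    show "\<And>X. X \<subseteq> S \<Longrightarrow> g (f (pmeet S X)) = pmeet U ((\<lambda>x. g (f x)) ` X)"
      using f1 g1 fX im by simp
    show "\<And>a b. a \<in> S \<Longrightarrow> b \<in> S \<Longrightarrow> g (f (himp S a b)) = himp U (g (f a)) (g (f b))"
      using f1 g1 by simp
  qed
qed



context frm
begin

lemma J_finite_le:
  assumes D: "D \<subseteq> S" "D \<noteq> {}" and cl: "\<And>a b. a \<in> D \<Longrightarrow> b \<in> D \<Longrightarrow> pjoin2 S a b \<in> D"
    and F: "finite F" "F \<subseteq> D"
  shows "\<exists>d\<in>D. pjoin S F \<le> d"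
  using F
proof (induction F rule: finite_induct)
  case empty
  obtain d where "d \<in> D" using D by blast
  hence "pbot S \<le> d" using D bot_le by blast
  thus ?case using \<open>d \<in> D\<close> J_empty_bot by auto
next
  case (insert x F)
  then obtain d where d: "d \<in> D" "pjoin S F \<le> d" by blast
  have xS: "x \<in> S" and FS: "F \<subseteq> S" using insert D by auto
  have "pjoin S (insert x F) = pjoin2 S x (pjoin S F)" using J_insert xS FS by blast
  also have "\<dots> \<le> pjoin2 S x d" using d D xS J_in[OF FS] by (intro j2_mono) auto
  finally show ?case using cl insert d by blast
qed

lemma compact_dir:
  assumes c: "compact_open S c" and D: "D \<subseteq> S" "D \<noteq> {}"
    and cl: "\<And>a b. a \<in> D \<Longrightarrow> b \<in> D \<Longrightarrow> pjoin2 S a b \<in> D"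
    and le: "c \<le> pjoin S D"
  shows "\<exists>d\<in>D. c \<le> d"
proof -
  obtain F where F: "F \<subseteq> D" "finite F" "c \<le> pjoin S F" using c D le unfolding compact_open_def by blast
  obtain d where "d \<in> D" "pjoin S F \<le> d" using J_finite_le[OF D cl F(2,1)] by blast
  thus ?thesis using F order_trans by blast
qed

lemma compl_neg_compl: "x \<in> S \<Longrightarrow> pjoin2 S (pneg S x) (pneg S (pneg S x)) = ptop S \<Longrightarrow> compl (pneg S x)"
  unfolding compl_def
  apply (rule conjI, rule pneg_in)
  apply (rule bexI[of _ "pneg S (pneg S x)"])
  using pneg_meet'[OF pneg_in, of x] pneg_in by auto

lemma bot_compact: "compact_open S (pbot S)"
  unfolding compact_open_def
proof (intro conjI allI impI bot_in)
  fix X assume "X \<subseteq> S"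
  have "pbot S \<le> pjoin S {}" using J_empty_bot by simp
  thus "\<exists>F\<subseteq>X. finite F \<and> pbot S \<le> pjoin S F" by blast
qed

lemma join_compact: assumes "compact_open S a" "compact_open S b" shows "compact_open S (pjoin2 S a b)"
proof -
  have aS: "a \<in> S" and bS: "b \<in> S" using assms unfolding compact_open_def by auto
  have ca: "\<forall>X\<subseteq>S. a \<le> pjoin S X \<longrightarrow> (\<exists>F\<subseteq>X. finite F \<and> a \<le> pjoin S F)"
      and cb: "\<forall>X\<subseteq>S. b \<le> pjoin S X \<longrightarrow> (\<exists>F\<subseteq>X. finite F \<and> b \<le> pjoin S F)"
      using assms unfolding compact_open_def by auto
  have "\<exists>F\<subseteq>X. finite F \<and> pjoin2 S a b \<le> pjoin S F" if X: "X \<subseteq> S" "pjoin2 S a b \<le> pjoin S X" for X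
  proof -
    have JX: "pjoin S X \<in> S" using J_in X(1) .
    have ab: "a \<le> pjoin S X \<and> b \<le> pjoin S X" using X(2) j2_le_iff[OF aS bS JX] by blast
    obtain F1 where F1: "F1 \<subseteq> X" "finite F1" "a \<le> pjoin S F1" using ca X(1) ab by blast
    obtain F2 where F2: "F2 \<subseteq> X" "finite F2" "b \<le> pjoin S F2" using cb X(1) ab by blast
    have U: "F1 \<union> F2 \<subseteq> S" using F1 F2 X by blast
    have "pjoin S F1 \<le> pjoin S (F1 \<union> F2)" "pjoin S F2 \<le> pjoin S (F1 \<union> F2)"
      using J_mono[OF _ U] by auto
    hence "a \<le> pjoin S (F1 \<union> F2)" "b \<le> pjoin S (F1 \<union> F2)" using F1 F2 order_trans by blast+
    hence "pjoin2 S a b \<le> pjoin S (F1 \<union> F2)" using j2_le_iff[OF aS bS J_in[OF U]] by blast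
    moreover have "F1 \<union> F2 \<subseteq> X" "finite (F1 \<union> F2)" using F1 F2 by auto
    ultimately show ?thesis by blast
  qed
  moreover have "pjoin2 S a b \<in> S" using j2_in aS bS .
  ultimately show ?thesis unfolding compact_open_def by blast
qed

end

lemma lat_idealD: assumes "lat_ideal A I"
  shows "I \<subseteq> A" "\<forall>x\<in>I. \<forall>y\<in>A. y \<le> x \<longrightarrow> y \<in> I" "pbot A \<in> I" "\<forall>x\<in>I. \<forall>y\<in>I. pjoin2 A x y \<in> I"
  using assms unfolding lat_ideal_def by auto

locale ston = frm +
  assumes coh: "coherent S" and reg: "regular_frame S" and ed: "extremally_disconnected S"

lemma stonean_ston: "stonean S \<Longrightarrow> ston S"
  unfolding stonean_def ston_def ston_axioms_def using frame_frm by blast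

context ston
begin

lemma top_compact: "compact_open S (ptop S)" using coh unfolding coherent_def COpen_def by blast

lemma ed': "x \<in> S \<Longrightarrow> compl (pneg S x)"
  using ed compl_neg_compl unfolding extremally_disconnected_def by blast

lemma compl_compact: assumes c: "compl c" shows "compact_open S c"
proof -
  obtain d where d: "c \<in> S" "d \<in> S" "pmeet2 S c d = pbot S" "pjoin2 S c d = ptop S"
    using c unfolding compl_def by blast
  have "\<exists>F\<subseteq>X. finite F \<and> c \<le> pjoin S F" if X: "X \<subseteq> S" "c \<le> pjoin S X" for X
  proof -
    have XS: "insert d X \<subseteq> S" using X d by auto
    have "ptop S = pjoin2 S c d" using d by simp
    also have "\<dots> \<le> pjoin S (insert d X)"
      using X d XS J_in J_ub j2_le_iff by (meson insertI1 J_mono order_trans subset_insertI)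
    finally have "ptop S \<le> pjoin S (insert d X)" .
    then obtain F where F: "F \<subseteq> insert d X" "finite F" "ptop S \<le> pjoin S F"
      using top_compact XS unfolding compact_open_def by blast
    let ?F = "F - {d}"
    have FS: "F \<subseteq> S" "?F \<subseteq> S" using F XS by auto
    have JF: "pjoin S ?F \<in> S" using J_in FS by blast
    have "pjoin S F \<le> pjoin2 S d (pjoin S ?F)"
    proof (rule J_least[OF FS(1)])
      show "pjoin2 S d (pjoin S ?F) \<in> S" using j2_in d JF by blast
      fix x assume x: "x \<in> F"
      show "x \<le> pjoin2 S d (pjoin S ?F)"
      proof (cases "x = d")
        case True thus ?thesis using j2_ub1 d JF by blast
      next
        case False
        hence "x \<le> pjoin S ?F" using J_ub FS x by blast
        thus ?thesis using j2_ub2 d JF by (meson order_trans)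
      qed
    qed
    hence top: "pjoin2 S d (pjoin S ?F) = ptop S" using F top_le_iff j2_in d JF by (meson order_trans)
    have "c = pmeet2 S c (pjoin2 S d (pjoin S ?F))" using top m2_top d by simp
    also have "\<dots> = pjoin2 S (pmeet2 S c d) (pmeet2 S c (pjoin S ?F))" using dist2 d JF by blast
    also have "\<dots> = pmeet2 S c (pjoin S ?F)" using d j2_bot m2_in JF by simp
    also have "\<dots> \<le> pjoin S ?F" using m2_lb2 d JF by blast
    finally have "c \<le> pjoin S ?F" .
    moreover have "?F \<subseteq> X" "finite ?F" using F by auto
    ultimately show ?thesis by blast
  qed
  thus ?thesis unfolding compact_open_def using d by blast
qed

lemma neg_join: assumes "x \<in> S" "y \<in> S"
  shows "pmeet2 S (pneg S x) (pneg S y) \<le> pneg S (pjoin2 S x y)"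
proof -
  let ?w = "pmeet2 S (pneg S x) (pneg S y)"
  have w: "?w \<in> S" using m2_in pneg_in by blast
  have "pmeet2 S ?w (pjoin2 S x y) = pjoin2 S (pmeet2 S ?w x) (pmeet2 S ?w y)" using dist2 w assms by blast
  also have "pmeet2 S ?w x = pbot S"
  proof -
    have "pmeet2 S ?w x \<le> pmeet2 S (pneg S x) x" using w assms pneg_in m2_lb1 by (intro m2_mono) auto
    hence "pmeet2 S ?w x \<le> pbot S" using pneg_meet assms by simp
    thus ?thesis using le_bot_iff m2_in w assms by blast
  qed
  also have "pmeet2 S ?w y = pbot S"
  proof -
    have "pmeet2 S ?w y \<le> pmeet2 S (pneg S y) y" using w assms pneg_in m2_lb2 by (intro m2_mono) auto
    hence "pmeet2 S ?w y \<le> pbot S" using pneg_meet assms by simp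
    thus ?thesis using le_bot_iff m2_in w assms by blast
  qed
  finally have "pmeet2 S ?w (pjoin2 S x y) = pbot S" using j2_bot bot_in by simp
  thus ?thesis using pneg_char w j2_in assms by blast
qed

lemma compact_compl: assumes c: "compact_open S c" shows "compl c"
proof -
  have cS: "c \<in> S" using c unfolding compact_open_def by blast
  let ?R = "{x\<in>S. pjoin2 S (pneg S x) c = ptop S}"
  have RS: "?R \<subseteq> S" by blast
  have c_eq: "c = pjoin S ?R" using reg cS unfolding regular_frame_def by blast
  have bR: "pbot S \<in> ?R"
    using neg_bot bot_in top_in j2_eq1 le_top cS by simp
  have clR: "pjoin2 S x y \<in> ?R" if x: "x \<in> ?R" and y: "y \<in> ?R" for x y
  proof -
    have xS: "x \<in> S" and yS: "y \<in> S" using x y by auto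
    let ?nx = "pneg S x" and ?ny = "pneg S y"
    have n: "?nx \<in> S" "?ny \<in> S" using pneg_in by auto
    let ?m = "pjoin2 S (pneg S (pjoin2 S x y)) c"
    have mS: "?m \<in> S" using j2_in pneg_in cS by blast
    have "ptop S = pmeet2 S (pjoin2 S ?nx c) (pjoin2 S ?ny c)" using x y m2_top top_in by simp
    also have "\<dots> = pjoin2 S (pmeet2 S (pjoin2 S ?nx c) ?ny) (pmeet2 S (pjoin2 S ?nx c) c)"
      using dist2 j2_in n cS by blast
    also have "\<dots> \<le> ?m"
    proof -
      have A: "pmeet2 S (pjoin2 S ?nx c) ?ny \<le> ?m"
      proof -
        have "pmeet2 S (pjoin2 S ?nx c) ?ny = pmeet2 S ?ny (pjoin2 S ?nx c)" by (rule m2_comm)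
        also have "\<dots> = pjoin2 S (pmeet2 S ?ny ?nx) (pmeet2 S ?ny c)" using dist2 n cS by blast
        also have "\<dots> \<le> ?m"
        proof (rule j2_mono)
          show "pmeet2 S ?ny ?nx \<in> S" "pmeet2 S ?ny c \<in> S" using m2_in n cS by auto
          show "pneg S (pjoin2 S x y) \<in> S" "c \<in> S" using pneg_in cS by auto
          have "pmeet2 S ?ny ?nx = pmeet2 S ?nx ?ny" by (rule m2_comm)
          thus "pmeet2 S ?ny ?nx \<le> pneg S (pjoin2 S x y)" using neg_join xS yS by simp
          show "pmeet2 S ?ny c \<le> c" using m2_lb2 n cS by blast
        qed
        finally show ?thesis .
      qed
      have B1: "pmeet2 S (pjoin2 S ?nx c) c \<le> c" using m2_lb2 j2_in n cS by blast
      have B2: "c \<le> ?m" using j2_ub2 pneg_in cS by blast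
      have B: "pmeet2 S (pjoin2 S ?nx c) c \<le> ?m" using B1 B2 by (rule order_trans)
      show ?thesis using A B j2_le_iff m2_in j2_in n cS mS by simp
    qed
    finally have "?m = ptop S" using top_le_iff mS by blast
    thus ?thesis using j2_in xS yS by blast
  qed
  have Rne: "?R \<noteq> {}" using bR by blast
  have cle: "c \<le> pjoin S ?R" using c_eq by simp
  obtain x where x: "x \<in> ?R" "c \<le> x"
    using compact_dir[OF c RS Rne clR cle] by blast
  have "x \<le> pjoin S ?R" using J_ub[OF RS x(1)] .
  hence "x \<le> c" using c_eq by simp
  hence "x = c" using x by simp
  hence "pjoin2 S (pneg S c) c = ptop S" using x by blast
  hence "pjoin2 S c (pneg S c) = ptop S" using j2_comm[of c "pneg S c"] by simp
  thus ?thesis unfolding compl_def using cS pneg_in pneg_meet' by blast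
qed

lemma COpen_compl: "c \<in> COpen S \<longleftrightarrow> compl c"
  unfolding COpen_def using compl_compact compact_compl by blast

abbreviation "B \<equiv> COpen S"

lemma B_sub: "B \<subseteq> S" unfolding COpen_def compact_open_def by blast
lemma bot_B: "pbot S \<in> B" using bot_compact unfolding COpen_def by blast
lemma top_B: "ptop S \<in> B" using top_compact unfolding COpen_def by blast
lemma meet_B: "a \<in> B \<Longrightarrow> b \<in> B \<Longrightarrow> pmeet2 S a b \<in> B" using coh unfolding coherent_def by blast
lemma join_B: "a \<in> B \<Longrightarrow> b \<in> B \<Longrightarrow> pjoin2 S a b \<in> B" using join_compact unfolding COpen_def by blast
lemma neg_B: "x \<in> S \<Longrightarrow> pneg S x \<in> B" using ed' COpen_compl by blast
lemma nn_B: "c \<in> B \<Longrightarrow> pneg S (pneg S c) = c" using compl_nn COpen_compl by blast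

lemma B_j2: assumes "a \<in> B" "b \<in> B" shows "pjoin2 B a b = pjoin2 S a b"
proof -
  have "p_is_lub S {a,b} (pjoin2 S a b)" unfolding pjoin2_def using assms B_sub by (intro lub) auto
  hence "p_is_lub B {a,b} (pjoin2 S a b)" using sub_lub B_sub join_B assms by blast
  thus ?thesis unfolding pjoin2_def[of B] by (rule pjoin_eqI)
qed

lemma B_m2: assumes "a \<in> B" "b \<in> B" shows "pmeet2 B a b = pmeet2 S a b"
proof -
  have "p_is_glb S {a,b} (pmeet2 S a b)" unfolding pmeet2_def using assms B_sub by (intro glb) auto
  hence "p_is_glb B {a,b} (pmeet2 S a b)" using sub_glb B_sub meet_B assms by blast
  thus ?thesis unfolding pmeet2_def[of B] by (rule pmeet_eqI)
qed

lemma B_bot: "pbot B = pbot S"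
proof -
  have "p_is_lub S {} (pbot S)" unfolding pbot_def by (intro lub) auto
  hence "p_is_lub B {} (pbot S)" using sub_lub B_sub bot_B by blast
  thus ?thesis unfolding pbot_def[of B] by (rule pjoin_eqI)
qed

lemma B_top: "ptop B = ptop S"
proof -
  have "p_is_glb S {} (ptop S)" unfolding ptop_def by (intro glb) auto
  hence "p_is_glb B {} (ptop S)" using sub_glb B_sub top_B by blast
  thus ?thesis unfolding ptop_def[of B] by (rule pmeet_eqI)
qed

lemma B_lub: assumes X: "X \<subseteq> B" shows "p_is_lub B X (pneg S (pneg S (pjoin S X)))"
proof (rule lubI)
  have XS: "X \<subseteq> S" using X B_sub by blast
  have J: "pjoin S X \<in> S" using J_in XS .
  show "pneg S (pneg S (pjoin S X)) \<in> B" using neg_B pneg_in by blast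
  fix y assume "y \<in> X"
  thus "y \<le> pneg S (pneg S (pjoin S X))" using J_ub XS le_nn J by (meson order_trans)
next
  fix z assume z: "z \<in> B" "\<forall>y\<in>X. y \<le> z"
  have XS: "X \<subseteq> S" using X B_sub by blast
  have zS: "z \<in> S" using z B_sub by blast
  have "pjoin S X \<le> z" using J_least XS zS z by blast
  hence "pneg S (pneg S (pjoin S X)) \<le> pneg S (pneg S z)"
    using pneg_anti J_in XS zS pneg_in by metis
  thus "pneg S (pneg S (pjoin S X)) \<le> z" using nn_B z by simp
qed

lemma B_join: "X \<subseteq> B \<Longrightarrow> pjoin B X = pneg S (pneg S (pjoin S X))"
  using B_lub pjoin_eqI by blast

lemma B_complete: "complete_poset B"
  unfolding complete_poset_def using B_lub by blast

lemma B_cba: "cba B"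
proof -
  interpret b: cl B by unfold_locales (rule B_complete)
  show ?thesis
  proof unfold_locales
    fix a b c assume abc: "a \<in> B" "b \<in> B" "c \<in> B"
    show "pmeet2 B a (pjoin2 B b c) = pjoin2 B (pmeet2 B a b) (pmeet2 B a c)"
      using abc B_j2 B_m2 meet_B join_B dist2 B_sub by (simp add: subset_iff)
  next
    fix a assume a: "a \<in> B"
    hence "compl a" using COpen_compl by blast
    then obtain d where d: "d \<in> S" "pmeet2 S a d = pbot S" "pjoin2 S a d = ptop S"
      unfolding compl_def by blast
    have "d = pneg S a" using compl_neg d a B_sub by blast
    hence dB: "d \<in> B" using neg_B a B_sub by blast
    show "\<exists>b\<in>B. pmeet2 B a b = pbot B \<and> pjoin2 B a b = ptop B"
      using dB d a B_j2 B_m2 B_bot B_top by metis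
  qed
qed

text \<open>the representation of S as ideals of B\<close>

definition Psi :: "'a \<Rightarrow> 'a set" where "Psi x = {c\<in>B. c \<le> x}"

lemma ideal_B: assumes "lat_ideal B I"
  shows "I \<subseteq> B" "\<And>x y. x \<in> I \<Longrightarrow> y \<in> B \<Longrightarrow> y \<le> x \<Longrightarrow> y \<in> I" "pbot S \<in> I"
    "\<And>x y. x \<in> I \<Longrightarrow> y \<in> I \<Longrightarrow> pjoin2 S x y \<in> I"
proof -
  have L: "I \<subseteq> B" "\<forall>x\<in>I. \<forall>y\<in>B. y \<le> x \<longrightarrow> y \<in> I" "pbot B \<in> I" "\<forall>x\<in>I. \<forall>y\<in>I. pjoin2 B x y \<in> I"
    using lat_idealD[OF assms] by auto
  have a: "I \<subseteq> B" "\<And>x y. x \<in> I \<Longrightarrow> y \<in> B \<Longrightarrow> y \<le> x \<Longrightarrow> y \<in> I" "pbot B \<in> I"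
    "\<And>x y. x \<in> I \<Longrightarrow> y \<in> I \<Longrightarrow> pjoin2 B x y \<in> I"
    using L by auto
  show "I \<subseteq> B" "\<And>x y. x \<in> I \<Longrightarrow> y \<in> B \<Longrightarrow> y \<le> x \<Longrightarrow> y \<in> I" by (fact a)+
  show "pbot S \<in> I" using a(3) B_bot by simp
  fix x y assume "x \<in> I" "y \<in> I"
  hence "x \<in> B" "y \<in> B" "pjoin2 B x y \<in> I" using a(4)[of x y] a(1) by auto
  thus "pjoin2 S x y \<in> I" using B_j2[of x y] by simp
qed

lemma Psi_ideal: assumes x: "x \<in> S" shows "Psi x \<in> Idl B"
proof -
  have sub: "Psi x \<subseteq> B" unfolding Psi_def by blast
  have dc: "\<forall>a\<in>Psi x. \<forall>b\<in>B. b \<le> a \<longrightarrow> b \<in> Psi x" unfolding Psi_def by (auto intro: order_trans)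
  have bt: "pbot B \<in> Psi x" unfolding Psi_def B_bot using bot_B bot_le x by blast
  have jn: "pjoin2 B a b \<in> Psi x" if ab: "a \<in> Psi x" "b \<in> Psi x" for a b
  proof -
    have abB: "a \<in> B" "b \<in> B" "a \<le> x" "b \<le> x" using ab unfolding Psi_def by auto
    have "pjoin2 S a b \<le> x" using j2_le_iff abB B_sub x by blast
    thus ?thesis using B_j2 abB join_B unfolding Psi_def by simp
  qed
  have "lat_ideal B (Psi x)" unfolding lat_ideal_def using sub dc bt jn by (intro conjI ballI) auto
  thus ?thesis unfolding Idl_def by simp
qed

lemma Phi_in: "I \<in> Idl B \<Longrightarrow> pjoin S I \<in> S"
  using ideal_B(1) B_sub J_in unfolding Idl_def by blast

lemma Phi_Psi: assumes x: "x \<in> S" shows "pjoin S (Psi x) = x"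
proof (rule antisym)
  have PS: "Psi x \<subseteq> S" unfolding Psi_def using B_sub by blast
  show "pjoin S (Psi x) \<le> x" using J_least PS x unfolding Psi_def by blast
  obtain C where C: "C \<subseteq> B" "x = pjoin S C" using coh x unfolding coherent_def by blast
  have "C \<subseteq> Psi x" unfolding Psi_def using C J_ub B_sub by blast
  thus "x \<le> pjoin S (Psi x)" using C J_mono PS by metis
qed

lemma Psi_Phi: assumes I: "I \<in> Idl B" shows "Psi (pjoin S I) = I"
proof
  have Id: "lat_ideal B I" using I unfolding Idl_def by blast
  note id = ideal_B[OF Id]
  have IS: "I \<subseteq> S" using id(1) B_sub by blast
  show "I \<subseteq> Psi (pjoin S I)" unfolding Psi_def using id(1) J_ub IS by blast
  show "Psi (pjoin S I) \<subseteq> I"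
  proof
    fix c assume "c \<in> Psi (pjoin S I)"
    hence c: "c \<in> B" "c \<le> pjoin S I" unfolding Psi_def by auto
    have "compact_open S c" using c unfolding COpen_def by blast
    then obtain d where "d \<in> I" "c \<le> d" using compact_dir[OF _ IS _ id(4) c(2)] id(3) by blast
    thus "c \<in> I" using id(2) c by blast
  qed
qed

lemma Psi_oiso: "oiso S (Idl B) Psi"
proof -
  have le: "Psi x \<le> Psi y \<longleftrightarrow> x \<le> y" if "x \<in> S" "y \<in> S" for x y
  proof
    assume "Psi x \<le> Psi y"
    hence "pjoin S (Psi x) \<le> pjoin S (Psi y)" using J_mono B_sub unfolding Psi_def by (metis (no_types, lifting) mem_Collect_eq subset_iff)
    thus "x \<le> y" using Phi_Psi that by simp
  next
    assume "x \<le> y" thus "Psi x \<le> Psi y" unfolding Psi_def by auto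
  qed
  have "inj_on Psi S" unfolding inj_on_def using le by (metis antisym order_refl)
  moreover have "Psi ` S = Idl B"
  proof
    show "Psi ` S \<subseteq> Idl B" using Psi_ideal by blast
    show "Idl B \<subseteq> Psi ` S" using Psi_Phi Phi_in by (metis image_eqI subsetI)
  qed
  ultimately show ?thesis unfolding oiso_def bij_betw_def using le by blast
qed

lemma Phi_oiso: "oiso (Idl B) S (pjoin S)"
  using oiso_inv[OF Psi_oiso] Phi_Psi by blast

lemma Idl_B_complete: "complete_poset (Idl B)"
  using oiso_complete[OF Psi_oiso cpl] .

lemma Phi_open: "open_frame_hom (Idl B) S (pjoin S)"
  using oiso_open[OF Phi_oiso Idl_B_complete] .

lemma Psi_open: "open_frame_hom S (Idl B) Psi"
  using oiso_open[OF Psi_oiso cpl] .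

end



context cl
begin
lemma m2_bot': "x \<in> S \<Longrightarrow> pmeet2 S (pbot S) x = pbot S"
  by (simp add: bot_in bot_le m2_eq1)
lemma j2_bot': "x \<in> S \<Longrightarrow> pjoin2 S x (pbot S) = x"
  by (simp add: bot_in bot_le j2_eq1)
end

context cba
begin

definition dn :: "'a \<Rightarrow> 'a set" where "dn a = {b\<in>S. b \<le> a}"
definition gen :: "'a set \<Rightarrow> 'a set" where "gen X = {a\<in>S. \<exists>F. finite F \<and> F \<subseteq> X \<and> a \<le> pjoin S F}"

lemma IdlI: assumes "I \<subseteq> S" "\<And>x y. x \<in> I \<Longrightarrow> y \<in> S \<Longrightarrow> y \<le> x \<Longrightarrow> y \<in> I" "pbot S \<in> I"
    "\<And>x y. x \<in> I \<Longrightarrow> y \<in> I \<Longrightarrow> pjoin2 S x y \<in> I"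
  shows "I \<in> Idl S"
proof -
  have "lat_ideal S I" unfolding lat_ideal_def using assms by (intro conjI ballI impI) auto
  thus ?thesis unfolding Idl_def by simp
qed

lemma IdlD: assumes "I \<in> Idl S"
  shows "I \<subseteq> S" "\<And>x y. x \<in> I \<Longrightarrow> y \<in> S \<Longrightarrow> y \<le> x \<Longrightarrow> y \<in> I" "pbot S \<in> I"
    "\<And>x y. x \<in> I \<Longrightarrow> y \<in> I \<Longrightarrow> pjoin2 S x y \<in> I"
proof -
  have L: "lat_ideal S I" using assms unfolding Idl_def by simp
  note l = lat_idealD[OF L]
  show "I \<subseteq> S" "pbot S \<in> I" using l by auto
  show "\<And>x y. x \<in> I \<Longrightarrow> y \<in> S \<Longrightarrow> y \<le> x \<Longrightarrow> y \<in> I" using l(2) by blast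
  show "\<And>x y. x \<in> I \<Longrightarrow> y \<in> I \<Longrightarrow> pjoin2 S x y \<in> I" using l(4) by blast
qed

lemma idl_fin: assumes I: "I \<in> Idl S" and F: "finite F" "F \<subseteq> I" shows "pjoin S F \<in> I"
  using F
proof (induction F rule: finite_induct)
  case empty thus ?case using IdlD(3)[OF I] J_empty_bot by simp
next
  case (insert x F)
  have xS: "x \<in> I" "x \<in> S" and FS: "F \<subseteq> S" using insert IdlD(1)[OF I] by auto
  have "pjoin S (insert x F) = pjoin2 S x (pjoin S F)" using J_insert xS FS by blast
  thus ?case using IdlD(4)[OF I] insert xS by auto
qed

lemma dn_Idl: assumes a: "a \<in> S" shows "dn a \<in> Idl S"
proof (rule IdlI)
  show "dn a \<subseteq> S" unfolding dn_def by blast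
  show "\<And>x y. x \<in> dn a \<Longrightarrow> y \<in> S \<Longrightarrow> y \<le> x \<Longrightarrow> y \<in> dn a" unfolding dn_def by auto
  show "pbot S \<in> dn a" unfolding dn_def using bot_in bot_le a by blast
  fix x y assume "x \<in> dn a" "y \<in> dn a"
  thus "pjoin2 S x y \<in> dn a" unfolding dn_def using j2_in j2_le_iff a by auto
qed

lemma J_dn: "a \<in> S \<Longrightarrow> pjoin S (dn a) = a"
  by (rule pjoin_max) (auto simp: dn_def)

lemma dn_le_iff: "a \<in> S \<Longrightarrow> b \<in> S \<Longrightarrow> dn a \<subseteq> dn b \<longleftrightarrow> a \<le> b"
  unfolding dn_def by (auto intro: order_trans)

lemma gen_Idl: assumes X: "X \<subseteq> S" shows "gen X \<in> Idl S"
proof (rule IdlI)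
  show "gen X \<subseteq> S" unfolding gen_def by blast
  show "\<And>x y. x \<in> gen X \<Longrightarrow> y \<in> S \<Longrightarrow> y \<le> x \<Longrightarrow> y \<in> gen X" unfolding gen_def by (auto intro: order_trans)
  have "pbot S \<le> pjoin S {}" using J_empty_bot by simp
  thus "pbot S \<in> gen X" unfolding gen_def using bot_in by blast
  fix x y assume x: "x \<in> gen X" and y: "y \<in> gen X"
  obtain F where F: "finite F" "F \<subseteq> X" "x \<le> pjoin S F" "x \<in> S" using x unfolding gen_def by blast
  obtain G where G: "finite G" "G \<subseteq> X" "y \<le> pjoin S G" "y \<in> S" using y unfolding gen_def by blast
  have FS: "F \<subseteq> S" "G \<subseteq> S" using F G X by auto
  have "pjoin2 S x y \<le> pjoin2 S (pjoin S F) (pjoin S G)"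
    using F G FS J_in by (intro j2_mono) auto
  also have "\<dots> = pjoin S (F \<union> G)" using J_union FS by simp
  finally have "pjoin2 S x y \<le> pjoin S (F \<union> G)" .
  moreover have "finite (F \<union> G)" "F \<union> G \<subseteq> X" using F G by auto
  moreover have "pjoin2 S x y \<in> S" using j2_in F G by blast
  ultimately show "pjoin2 S x y \<in> gen X" unfolding gen_def by blast
qed

lemma gen_least: assumes Z: "Z \<in> Idl S" "X \<subseteq> Z" shows "gen X \<subseteq> Z"
proof
  fix a assume "a \<in> gen X"
  then obtain F where F: "a \<in> S" "finite F" "F \<subseteq> X" "a \<le> pjoin S F" unfolding gen_def by blast
  have "pjoin S F \<in> Z" using idl_fin[OF Z(1) F(2)] F Z by blast
  thus "a \<in> Z" using IdlD(2)[OF Z(1)] F by blast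
qed

lemma gen_ub: "X \<subseteq> S \<Longrightarrow> X \<subseteq> gen X"
proof
  fix x assume "X \<subseteq> S" "x \<in> X"
  moreover hence "x \<le> pjoin S {x}" using J_ub by auto
  ultimately show "x \<in> gen X" unfolding gen_def by blast
qed

lemma idl_lub: assumes I: "II \<subseteq> Idl S" shows "p_is_lub (Idl S) II (gen (\<Union>II))"
proof (rule lubI)
  have U: "\<Union>II \<subseteq> S" using I IdlD(1) by blast
  show "gen (\<Union>II) \<in> Idl S" using gen_Idl U .
  show "\<And>y. y \<in> II \<Longrightarrow> y \<le> gen (\<Union>II)" using gen_ub U by blast
  show "\<And>z. z \<in> Idl S \<Longrightarrow> \<forall>y\<in>II. y \<le> z \<Longrightarrow> gen (\<Union>II) \<le> z" using gen_least by (simp add: Sup_le_iff)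
qed

lemma idl_join: "II \<subseteq> Idl S \<Longrightarrow> pjoin (Idl S) II = gen (\<Union>II)"
  using idl_lub pjoin_eqI by blast

lemma Idl_complete: "complete_poset (Idl S)"
  unfolding complete_poset_def using idl_lub by blast

lemma Idl_int: assumes "I \<in> Idl S" "J \<in> Idl S" shows "I \<inter> J \<in> Idl S"
proof (rule IdlI)
  note a = IdlD[OF assms(1)] and b = IdlD[OF assms(2)]
  show "I \<inter> J \<subseteq> S" using a(1) by blast
  show "\<And>x y. x \<in> I \<inter> J \<Longrightarrow> y \<in> S \<Longrightarrow> y \<le> x \<Longrightarrow> y \<in> I \<inter> J"
  proof -
    fix x y assume "x \<in> I \<inter> J" "y \<in> S" "y \<le> x"
    thus "y \<in> I \<inter> J" using a(2)[of x y] b(2)[of x y] by simp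
  qed
  show "pbot S \<in> I \<inter> J" using a(3) b(3) by simp
  show "\<And>x y. x \<in> I \<inter> J \<Longrightarrow> y \<in> I \<inter> J \<Longrightarrow> pjoin2 S x y \<in> I \<inter> J"
  proof -
    fix x y assume "x \<in> I \<inter> J" "y \<in> I \<inter> J"
    thus "pjoin2 S x y \<in> I \<inter> J" using a(4)[of x y] b(4)[of x y] by simp
  qed
qed

lemma idl_m2: assumes "I \<in> Idl S" "J \<in> Idl S" shows "pmeet2 (Idl S) I J = I \<inter> J"
  unfolding pmeet2_def[of "Idl S"] by (rule pmeet_eqI2) (use Idl_int assms in auto)

lemma idl_meet: assumes X: "XX \<subseteq> Idl S" shows "pmeet (Idl S) XX = S \<inter> \<Inter>XX"
proof (rule pmeet_eqI2)
  show "S \<inter> \<Inter>XX \<in> Idl S"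
  proof (rule IdlI)
    show "S \<inter> \<Inter> XX \<subseteq> S" by blast
    show "\<And>x y. x \<in> S \<inter> \<Inter> XX \<Longrightarrow> y \<in> S \<Longrightarrow> y \<le> x \<Longrightarrow> y \<in> S \<inter> \<Inter> XX"
      using X IdlD(2) by blast
    show "pbot S \<in> S \<inter> \<Inter> XX" using X IdlD(3) bot_in by blast
    show "\<And>x y. x \<in> S \<inter> \<Inter> XX \<Longrightarrow> y \<in> S \<inter> \<Inter> XX \<Longrightarrow> pjoin2 S x y \<in> S \<inter> \<Inter> XX"
      using X IdlD(4) j2_in by blast
  qed
  show "\<And>y. y \<in> XX \<Longrightarrow> S \<inter> \<Inter> XX \<le> y" by blast
  show "\<And>z. z \<in> Idl S \<Longrightarrow> \<forall>y\<in>XX. z \<le> y \<Longrightarrow> z \<le> S \<inter> \<Inter> XX" using IdlD(1) by blast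
qed

lemma S_Idl: "S \<in> Idl S"
  by (rule IdlI) (auto simp: bot_in j2_in)

lemma bot_Idl: "{pbot S} \<in> Idl S"
  by (rule IdlI) (auto simp: bot_in le_bot_iff j2_bot bot_in)

lemma idl_top: "ptop (Idl S) = S"
  unfolding ptop_def[of "Idl S"] by (rule pmeet_eqI2) (use S_Idl IdlD(1) in auto)

lemma idl_bot: "pbot (Idl S) = {pbot S}"
  unfolding pbot_def[of "Idl S"] by (rule pjoin_eqI2) (use bot_Idl IdlD(3) in auto)

lemma idl_j2: assumes I: "I \<in> Idl S" and J: "J \<in> Idl S"
  shows "pjoin2 (Idl S) I J = {a\<in>S. \<exists>i\<in>I. \<exists>j\<in>J. a \<le> pjoin2 S i j}"
  unfolding pjoin2_def[of "Idl S"]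
proof (rule pjoin_eqI2)
  note a = IdlD[OF I] and b = IdlD[OF J]
  let ?K = "{a\<in>S. \<exists>i\<in>I. \<exists>j\<in>J. a \<le> pjoin2 S i j}"
  show "?K \<in> Idl S"
  proof (rule IdlI)
    show "?K \<subseteq> S" by blast
    show "\<And>x y. x \<in> ?K \<Longrightarrow> y \<in> S \<Longrightarrow> y \<le> x \<Longrightarrow> y \<in> ?K" by (auto intro: order_trans)
    have "pbot S \<le> pjoin2 S (pbot S) (pbot S)" using j2_ub1 bot_in by blast
    thus "pbot S \<in> ?K" using a b bot_in by blast
  next
    fix x y assume x: "x \<in> ?K" and y: "y \<in> ?K"
    obtain i j where ij: "i \<in> I" "j \<in> J" "x \<le> pjoin2 S i j" "x \<in> S" using x by blast
    obtain i' j' where ij': "i' \<in> I" "j' \<in> J" "y \<le> pjoin2 S i' j'" "y \<in> S" using y by blast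
    have S: "i \<in> S" "j \<in> S" "i' \<in> S" "j' \<in> S" using ij ij' a b by auto
    let ?i = "pjoin2 S i i'" and ?j = "pjoin2 S j j'"
    have ii: "?i \<in> I" "?j \<in> J" using a b ij ij' by auto
    have iS: "?i \<in> S" "?j \<in> S" using S j2_in by auto
    have "pjoin2 S i j \<le> pjoin2 S ?i ?j" using S iS j2_ub1 by (intro j2_mono) auto
    moreover have "pjoin2 S i' j' \<le> pjoin2 S ?i ?j" using S iS j2_ub2 by (intro j2_mono) auto
    ultimately have "x \<le> pjoin2 S ?i ?j" "y \<le> pjoin2 S ?i ?j" using ij ij' order_trans by blast+
    hence "pjoin2 S x y \<le> pjoin2 S ?i ?j" using j2_le_iff ij ij' j2_in iS by blast
    thus "pjoin2 S x y \<in> ?K" using ii j2_in ij ij' by blast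
  qed
  fix y assume "y \<in> {I, J}"
  thus "y \<le> ?K"
  proof
    assume y: "y = I"
    show ?thesis unfolding y
    proof
      fix x assume x: "x \<in> I"
      hence "x \<le> pjoin2 S x (pbot S)" using j2_ub1 a bot_in by blast
      thus "x \<in> ?K" using x b a by blast
    qed
  next
    assume "y \<in> {J}" hence y: "y = J" by simp
    show ?thesis unfolding y
    proof
      fix x assume x: "x \<in> J"
      hence "x \<le> pjoin2 S (pbot S) x" using j2_ub2 b bot_in by blast
      thus "x \<in> ?K" using x b a by blast
    qed
  qed
next
  note a = IdlD[OF I] and b = IdlD[OF J]
  fix Z assume Z: "Z \<in> Idl S" "\<forall>y\<in>{I, J}. y \<le> Z"
  show "{a\<in>S. \<exists>i\<in>I. \<exists>j\<in>J. a \<le> pjoin2 S i j} \<le> Z"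
  proof
    fix x assume "x \<in> {a\<in>S. \<exists>i\<in>I. \<exists>j\<in>J. a \<le> pjoin2 S i j}"
    then obtain i j where ij: "i \<in> I" "j \<in> J" "x \<le> pjoin2 S i j" "x \<in> S" by blast
    have "pjoin2 S i j \<in> Z" using IdlD(4)[OF Z(1)] Z(2) ij by blast
    thus "x \<in> Z" using IdlD(2)[OF Z(1)] ij by blast
  qed
qed

lemma Idl_frm: "frm (Idl S)"
proof -
  interpret I: cl "Idl S" by unfold_locales (rule Idl_complete)
  have "pmeet2 (Idl S) I (pjoin (Idl S) XX) = pjoin (Idl S) ((\<lambda>X. pmeet2 (Idl S) I X) ` XX)"
    if I: "I \<in> Idl S" and XX: "XX \<subseteq> Idl S" for I XX
  proof -
    have im: "(\<lambda>X. pmeet2 (Idl S) I X) ` XX = (\<lambda>X. I \<inter> X) ` XX" using idl_m2 I XX by auto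
    have imS: "(\<lambda>X. I \<inter> X) ` XX \<subseteq> Idl S" using Idl_int I XX by auto
    have L: "pmeet2 (Idl S) I (pjoin (Idl S) XX) = I \<inter> gen (\<Union>XX)"
      using idl_m2 I idl_join XX I.J_in by simp
    have R: "pjoin (Idl S) ((\<lambda>X. pmeet2 (Idl S) I X) ` XX) = gen (\<Union>((\<lambda>X. I \<inter> X) ` XX))"
      unfolding im using idl_join imS by blast
    have US: "\<Union>XX \<subseteq> S" using XX IdlD(1) by blast
    have "I \<inter> gen (\<Union>XX) = gen (\<Union>((\<lambda>X. I \<inter> X) ` XX))"
    proof
      show "I \<inter> gen (\<Union>XX) \<subseteq> gen (\<Union>((\<lambda>X. I \<inter> X) ` XX))"
      proof
        fix a assume a: "a \<in> I \<inter> gen (\<Union>XX)"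
        then obtain F where F: "a \<in> S" "finite F" "F \<subseteq> \<Union>XX" "a \<le> pjoin S F" unfolding gen_def by blast
        have FS: "F \<subseteq> S" using F US by blast
        let ?G = "(\<lambda>f. pmeet2 S a f) ` F"
        have "a = pmeet2 S a (pjoin S F)" using F m2_eq1 J_in FS by simp
        also have "\<dots> = pjoin S ?G" using dist F FS by blast
        finally have aG: "a \<le> pjoin S ?G" by simp
        have "?G \<subseteq> \<Union>((\<lambda>X. I \<inter> X) ` XX)"
        proof
          fix g assume "g \<in> ?G"
          then obtain f where f: "f \<in> F" "g = pmeet2 S a f" by blast
          then obtain X where X: "X \<in> XX" "f \<in> X" using F by blast
          have fS: "f \<in> S" using f FS by blast
          have gS: "g \<in> S" using f m2_in F fS by blast
          have "g \<in> I" using IdlD(2)[OF I] a gS f m2_lb1 F fS by blast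
          moreover have "g \<in> X" using IdlD(2)[of X] X XX gS f m2_lb2 F fS by blast
          ultimately show "g \<in> \<Union>((\<lambda>X. I \<inter> X) ` XX)" using X by blast
        qed
        moreover have "finite ?G" using F by blast
        ultimately show "a \<in> gen (\<Union>((\<lambda>X. I \<inter> X) ` XX))" unfolding gen_def using aG F by blast
      qed
      show "gen (\<Union>((\<lambda>X. I \<inter> X) ` XX)) \<subseteq> I \<inter> gen (\<Union>XX)"
      proof
        fix a assume "a \<in> gen (\<Union>((\<lambda>X. I \<inter> X) ` XX))"
        then obtain F where F: "a \<in> S" "finite F" "F \<subseteq> \<Union>((\<lambda>X. I \<inter> X) ` XX)" "a \<le> pjoin S F" unfolding gen_def by blast
        have "F \<subseteq> I" using F by blast
        hence "pjoin S F \<in> I" using idl_fin I F by blast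
        hence "a \<in> I" using IdlD(2)[OF I] F by blast
        moreover have "F \<subseteq> \<Union>XX" using F by blast
        ultimately show "a \<in> I \<inter> gen (\<Union>XX)" unfolding gen_def using F by blast
      qed
    qed
    thus ?thesis using L R by simp
  qed
  thus ?thesis unfolding frm_def frm_axioms_def using I.cl_axioms by blast
qed

lemma idl_himp: assumes I: "I \<in> Idl S" and J: "J \<in> Idl S"
  shows "himp (Idl S) I J = {a\<in>S. \<forall>i\<in>I. pmeet2 S a i \<in> J}"
  unfolding himp_def
proof (rule pjoin_max)
  let ?H = "{a\<in>S. \<forall>i\<in>I. pmeet2 S a i \<in> J}"
  note a = IdlD[OF I] and b = IdlD[OF J]
  show H: "?H \<in> Idl S"
  proof (rule IdlI)
    show "?H \<subseteq> S" by blast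
    show "\<And>x y. x \<in> ?H \<Longrightarrow> y \<in> S \<Longrightarrow> y \<le> x \<Longrightarrow> y \<in> ?H"
    proof -
      fix x y assume x: "x \<in> ?H" and y: "y \<in> S" "y \<le> x"
      have "pmeet2 S y i \<in> J" if i: "i \<in> I" for i
      proof -
        have iS: "i \<in> S" using i a by blast
        have "pmeet2 S y i \<le> pmeet2 S x i" using y x iS by (intro m2_mono) auto
        thus ?thesis using b(2) x i m2_in y iS by blast
      qed
      thus "y \<in> ?H" using y by blast
    qed
    show "pbot S \<in> ?H" using m2_bot' a b bot_in by auto
    fix x y assume x: "x \<in> ?H" and y: "y \<in> ?H"
    have "pmeet2 S (pjoin2 S x y) i \<in> J" if i: "i \<in> I" for i
    proof -
      have iS: "i \<in> S" using i a by blast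
      have "pmeet2 S (pjoin2 S x y) i = pmeet2 S i (pjoin2 S x y)" by (rule m2_comm)
      also have "\<dots> = pjoin2 S (pmeet2 S i x) (pmeet2 S i y)" using dist2 iS x y by blast
      also have "\<dots> = pjoin2 S (pmeet2 S x i) (pmeet2 S y i)" using m2_comm[of i x] m2_comm[of i y] by simp
      finally show ?thesis using x y i b(4) by simp
    qed
    thus "pjoin2 S x y \<in> ?H" using j2_in x y by blast
  qed
  have "pmeet2 (Idl S) ?H I = ?H \<inter> I" using idl_m2 H I by blast
  also have "\<dots> \<subseteq> J"
  proof
    fix x assume "x \<in> ?H \<inter> I"
    thus "x \<in> J" using m2_idem by force
  qed
  finally show "?H \<in> {w \<in> Idl S. pmeet2 (Idl S) w I \<le> J}" using H by blast
  fix W assume "W \<in> {w \<in> Idl S. pmeet2 (Idl S) w I \<le> J}"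
  hence W: "W \<in> Idl S" "W \<inter> I \<subseteq> J" using idl_m2 I by auto
  show "W \<le> ?H"
  proof
    fix x assume x: "x \<in> W"
    have xS: "x \<in> S" using x IdlD(1)[OF W(1)] by blast
    have "pmeet2 S x i \<in> J" if i: "i \<in> I" for i
    proof -
      have iS: "i \<in> S" using i a by blast
      have "pmeet2 S x i \<in> W" using IdlD(2)[OF W(1)] x m2_in xS iS m2_lb1 by blast
      moreover have "pmeet2 S x i \<in> I" using a(2) i m2_in xS iS m2_lb2 by blast
      ultimately show ?thesis using W by blast
    qed
    thus "x \<in> ?H" using xS by blast
  qed
qed

lemma idl_neg: assumes I: "I \<in> Idl S" shows "pneg (Idl S) I = dn (pneg S (pjoin S I))"
proof -
  note a = IdlD[OF I]
  have JI: "pjoin S I \<in> S" using J_in a(1) .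
  have "pneg (Idl S) I = {x\<in>S. \<forall>i\<in>I. pmeet2 S x i \<in> {pbot S}}"
    unfolding pneg_def idl_bot using idl_himp I bot_Idl by blast
  also have "\<dots> = dn (pneg S (pjoin S I))"
  proof -
    have "(\<forall>i\<in>I. pmeet2 S x i = pbot S) \<longleftrightarrow> x \<le> pneg S (pjoin S I)" if x: "x \<in> S" for x
    proof
      assume A: "\<forall>i\<in>I. pmeet2 S x i = pbot S"
      have "pmeet2 S x (pjoin S I) = pjoin S ((\<lambda>i. pmeet2 S x i) ` I)" using dist x a(1) by blast
      also have "\<dots> \<le> pbot S" using A bot_in a(1) x m2_in by (intro J_least) auto
      finally show "x \<le> pneg S (pjoin S I)" using pneg_char x JI le_bot_iff m2_in by blast
    next
      assume A: "x \<le> pneg S (pjoin S I)"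
      hence B: "pmeet2 S x (pjoin S I) = pbot S" using pneg_char x JI by blast
      show "\<forall>i\<in>I. pmeet2 S x i = pbot S"
      proof
        fix i assume i: "i \<in> I"
        have iS: "i \<in> S" using i a by blast
        have "pmeet2 S x i \<le> pmeet2 S x (pjoin S I)" using x iS JI J_ub a(1) i by (intro m2_mono) auto
        thus "pmeet2 S x i = pbot S" using B le_bot_iff m2_in x iS by simp
      qed
    qed
    thus ?thesis unfolding dn_def by auto
  qed
  finally show ?thesis .
qed

lemma nn_pj: assumes I: "I \<in> Idl S" shows "pneg (Idl S) (pneg (Idl S) I) = dn (pjoin S I)"
proof -
  have JI: "pjoin S I \<in> S" using J_in IdlD(1)[OF I] .
  have "pneg (Idl S) (pneg (Idl S) I) = dn (pneg S (pjoin S (dn (pneg S (pjoin S I)))))"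
    using idl_neg I dn_Idl pneg_in by simp
  also have "\<dots> = dn (pjoin S I)" using J_dn pneg_in nn JI by simp
  finally show ?thesis .
qed

lemma j2_full: assumes I: "I \<in> Idl S" and J: "J \<in> Idl S" and i: "i \<in> I" and j: "j \<in> J"
  and t: "pjoin2 S i j = ptop S"
  shows "pjoin2 (Idl S) I J = ptop (Idl S)"
proof -
  have "{a\<in>S. \<exists>i\<in>I. \<exists>j\<in>J. a \<le> pjoin2 S i j} = S"
  proof
    show "S \<subseteq> {a\<in>S. \<exists>i\<in>I. \<exists>j\<in>J. a \<le> pjoin2 S i j}"
    proof
      fix x assume "x \<in> S"
      hence "x \<le> pjoin2 S i j" using t le_top by simp
      thus "x \<in> {a\<in>S. \<exists>i\<in>I. \<exists>j\<in>J. a \<le> pjoin2 S i j}" using i j \<open>x \<in> S\<close> by blast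
    qed
  qed blast
  hence "pjoin2 (Idl S) I J = S" unfolding idl_j2[OF I J] .
  thus ?thesis using idl_top by simp
qed

end



context cba
begin

lemma dn_compact: assumes a: "a \<in> S" shows "compact_open (Idl S) (dn a)"
  unfolding compact_open_def
proof (intro conjI allI impI)
  show "dn a \<in> Idl S" using dn_Idl a .
  fix XX assume XX: "XX \<subseteq> Idl S" and le: "dn a \<le> pjoin (Idl S) XX"
  have "a \<in> dn a" unfolding dn_def using a by blast
  hence "a \<in> pjoin (Idl S) XX" using le by blast
  hence "a \<in> gen (\<Union>XX)" using idl_join[OF XX] by simp
  then obtain F where F: "finite F" "F \<subseteq> \<Union>XX" "a \<le> pjoin S F" unfolding gen_def by blast
  have "\<forall>f\<in>F. \<exists>X\<in>XX. f \<in> X" using F by blast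
  then obtain g where g: "\<forall>f\<in>F. g f \<in> XX \<and> f \<in> g f" using bchoice[of F "\<lambda>f X. X \<in> XX \<and> f \<in> X"] by blast
  let ?FF = "g ` F"
  have FF: "?FF \<subseteq> XX" "finite ?FF" using g F by auto
  have "dn a \<subseteq> gen (\<Union>?FF)"
  proof
    fix b assume "b \<in> dn a"
    hence b: "b \<in> S" "b \<le> a" unfolding dn_def by auto
    have "F \<subseteq> \<Union>?FF" using g by blast
    moreover have "b \<le> pjoin S F" using b(2) F(3) by (rule order_trans)
    ultimately show "b \<in> gen (\<Union>?FF)" unfolding gen_def using b F by blast
  qed
  hence "dn a \<le> pjoin (Idl S) ?FF" using idl_join FF XX by simp
  thus "\<exists>F\<subseteq>XX. finite F \<and> dn a \<le> pjoin (Idl S) F" using FF by blast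
qed

lemma Idl_gen_dn: assumes K: "K \<in> Idl S" shows "pjoin (Idl S) (dn ` K) = K"
proof -
  have KS: "K \<subseteq> S" using IdlD(1)[OF K] .
  have sub: "dn ` K \<subseteq> Idl S" using dn_Idl KS by blast
  have U: "\<Union>(dn ` K) = K"
  proof
    show "\<Union>(dn ` K) \<subseteq> K" using IdlD(2)[OF K] unfolding dn_def by blast
    show "K \<subseteq> \<Union>(dn ` K)" using KS unfolding dn_def by blast
  qed
  have "gen K = K"
  proof
    show "gen K \<subseteq> K" using gen_least K by blast
    show "K \<subseteq> gen K" using gen_ub KS .
  qed
  thus ?thesis using idl_join sub U by simp
qed

lemma compact_dn: assumes c: "compact_open (Idl S) K" shows "\<exists>k\<in>S. K = dn k"
proof -
  have K: "K \<in> Idl S" using c unfolding compact_open_def by blast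
  have KS: "K \<subseteq> S" using IdlD(1)[OF K] .
  have sub: "dn ` K \<subseteq> Idl S" using dn_Idl KS by blast
  have "K \<le> pjoin (Idl S) (dn ` K)" using Idl_gen_dn K by simp
  then obtain FF where FF: "FF \<subseteq> dn ` K" "finite FF" "K \<le> pjoin (Idl S) FF"
    using c sub unfolding compact_open_def by blast
  obtain F where F: "F \<subseteq> K" "finite F" "FF = dn ` F" using finite_subset_image[OF FF(2,1)] by blast
  let ?k = "pjoin S F"
  have k: "?k \<in> K" using idl_fin K F by blast
  have kS: "?k \<in> S" using k KS by blast
  have FFS: "FF \<subseteq> Idl S" using FF sub by blast
  have "pjoin (Idl S) FF = gen (\<Union>FF)" using idl_join FFS by blast
  also have "\<dots> \<subseteq> dn ?k"
  proof (rule gen_least)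
    show "dn ?k \<in> Idl S" using dn_Idl kS .
    show "\<Union>FF \<subseteq> dn ?k"
    proof
      fix x assume "x \<in> \<Union>FF"
      then obtain f where f: "f \<in> F" "x \<in> dn f" using F by blast
      have "f \<le> ?k" using J_ub F KS f by blast
      thus "x \<in> dn ?k" using f unfolding dn_def by (auto intro: order_trans)
    qed
  qed
  finally have "K \<subseteq> dn ?k" using FF by blast
  moreover have "dn ?k \<subseteq> K" using IdlD(2)[OF K] k unfolding dn_def by blast
  ultimately show ?thesis using kS by blast
qed

lemma COpen_Idl: "COpen (Idl S) = dn ` S"
  unfolding COpen_def using dn_compact compact_dn by blast

lemma dn_oiso: "oiso S (COpen (Idl S)) dn"
proof -
  have "inj_on dn S" unfolding inj_on_def using dn_le_iff by (metis antisym order_refl)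
  thus ?thesis unfolding oiso_def bij_betw_def COpen_Idl using dn_le_iff by blast
qed

lemma Idl_ston: "ston (Idl S)"
proof -
  interpret I: frm "Idl S" by (rule Idl_frm)
  have coh: "coherent (Idl S)"
    unfolding coherent_def
  proof (intro conjI ballI)
    show "ptop (Idl S) \<in> COpen (Idl S)" unfolding COpen_Idl idl_top
    proof
      show "S = dn (ptop S)" unfolding dn_def using le_top by blast
    qed (rule top_in)
  next
    fix a b assume ab: "a \<in> COpen (Idl S)" "b \<in> COpen (Idl S)"
    then obtain x y where xy: "x \<in> S" "y \<in> S" "a = dn x" "b = dn y" unfolding COpen_Idl by blast
    have "pmeet2 (Idl S) a b = a \<inter> b" using idl_m2 dn_Idl xy by blast
    also have "\<dots> = dn (pmeet2 S x y)" unfolding xy dn_def using le_m2_iff xy by auto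
    finally show "pmeet2 (Idl S) a b \<in> COpen (Idl S)" unfolding COpen_Idl using m2_in xy by blast
  next
    fix K assume K: "K \<in> Idl S"
    have "dn ` K \<subseteq> COpen (Idl S)" unfolding COpen_Idl using IdlD(1)[OF K] by blast
    thus "\<exists>C\<subseteq>COpen (Idl S). K = pjoin (Idl S) C" using Idl_gen_dn K by metis
  qed
  have reg: "regular_frame (Idl S)"
    unfolding regular_frame_def
  proof
    fix J assume J: "J \<in> Idl S"
    let ?R = "{X \<in> Idl S. pjoin2 (Idl S) (pneg (Idl S) X) J = ptop (Idl S)}"
    show "J = pjoin (Idl S) ?R"
    proof (rule pjoin_eqI2[symmetric])
      show "J \<in> Idl S" by fact
      fix X assume "X \<in> ?R"
      hence X: "X \<in> Idl S" "pjoin2 (Idl S) (pneg (Idl S) X) J = S" using idl_top by auto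
      have XS: "X \<subseteq> S" using IdlD(1)[OF X(1)] .
      let ?s = "pjoin S X"
      have sS: "?s \<in> S" using J_in XS .
      have "ptop S \<in> pjoin2 (Idl S) (pneg (Idl S) X) J" using X top_in by simp
      hence "ptop S \<in> pjoin2 (Idl S) (dn (pneg S ?s)) J" using idl_neg[OF X(1)] by simp
      hence "ptop S \<in> {a\<in>S. \<exists>i\<in>dn (pneg S ?s). \<exists>j\<in>J. a \<le> pjoin2 S i j}"
        using idl_j2[OF dn_Idl[OF pneg_in] J] by simp
      then obtain i j where ij: "i \<in> dn (pneg S ?s)" "j \<in> J" "ptop S \<le> pjoin2 S i j"
        by blast
      have iS: "i \<in> S" "i \<le> pneg S ?s" using ij unfolding dn_def by auto
      have jS: "j \<in> S" using ij IdlD(1)[OF J] by blast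
      have t: "pjoin2 S i j = ptop S" using ij top_le_iff j2_in iS jS by blast
      show "X \<le> J"
      proof
        fix x assume x: "x \<in> X"
        have xS: "x \<in> S" using x XS by blast
        have xs: "x \<le> ?s" using J_ub XS x by blast
        have "x = pmeet2 S x (pjoin2 S i j)" using t m2_top xS by simp
        also have "\<dots> = pjoin2 S (pmeet2 S x i) (pmeet2 S x j)" using dist2 xS iS jS by blast
        also have "pmeet2 S x i = pbot S"
        proof -
          have "pmeet2 S x i \<le> pmeet2 S ?s (pneg S ?s)" using xS iS sS pneg_in xs by (intro m2_mono) auto
          also have "\<dots> = pbot S" using pneg_meet' sS by blast
          finally show ?thesis using le_bot_iff m2_in xS iS by blast
        qed
        also have "pjoin2 S (pbot S) (pmeet2 S x j) = pmeet2 S x j" using j2_bot m2_in xS jS by blast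
        finally have "x = pmeet2 S x j" .
        also have "\<dots> \<le> j" using m2_lb2 xS jS by blast
        finally have "x \<le> j" .
        thus "x \<in> J" using IdlD(2)[OF J] ij xS by blast
      qed
    next
      fix Z assume Z: "Z \<in> Idl S" "\<forall>X\<in>?R. X \<le> Z"
      show "J \<le> Z"
      proof
        fix j assume j: "j \<in> J"
        have jS: "j \<in> S" using j IdlD(1)[OF J] by blast
        have "pneg (Idl S) (dn j) = dn (pneg S j)" using idl_neg dn_Idl J_dn jS by simp
        moreover have "pneg S j \<in> dn (pneg S j)" unfolding dn_def using pneg_in by blast
        moreover have "pjoin2 S (pneg S j) j = ptop S" using join_neg jS j2_comm by metis
        ultimately have "pjoin2 (Idl S) (pneg (Idl S) (dn j)) J = ptop (Idl S)"
          using j2_full[OF _ J _ j] dn_Idl pneg_in by simp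
        hence "dn j \<in> ?R" using dn_Idl jS by blast
        hence "dn j \<subseteq> Z" using Z by blast
        thus "j \<in> Z" unfolding dn_def using jS by blast
      qed
    qed
  qed
  have ed: "extremally_disconnected (Idl S)"
    unfolding extremally_disconnected_def
  proof
    fix X assume X: "X \<in> Idl S"
    let ?s = "pjoin S X"
    have sS: "?s \<in> S" using J_in IdlD(1)[OF X] .
    have "pneg (Idl S) (pneg (Idl S) X) = dn (pneg S (pneg S ?s))"
      using idl_neg X dn_Idl J_dn pneg_in by simp
    moreover have "pneg (Idl S) X = dn (pneg S ?s)" using idl_neg X by blast
    ultimately show "pjoin2 (Idl S) (pneg (Idl S) X) (pneg (Idl S) (pneg (Idl S) X)) = ptop (Idl S)"
      using j2_full[of "dn (pneg S ?s)" "dn (pneg S (pneg S ?s))" "pneg S ?s" "pneg S (pneg S ?s)"]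
        dn_Idl pneg_in join_neg unfolding dn_def by simp
  qed
  show ?thesis unfolding ston_def ston_axioms_def using I.frm_axioms coh reg ed Idl_frm by blast
qed

end



locale chom = A: cba A + B: cba B for A :: "'a::order set" and B :: "'b::order set" +
  fixes h :: "'a \<Rightarrow> 'b"
  assumes hom: "bool_hom_sup A B h"
begin

lemma hin: "a \<in> A \<Longrightarrow> h a \<in> B" using hom unfolding bool_hom_sup_def by blast
lemma htop: "h (ptop A) = ptop B" using hom unfolding bool_hom_sup_def by blast
lemma hbot: "h (pbot A) = pbot B" using hom unfolding bool_hom_sup_def by blast
lemma hm2: "a \<in> A \<Longrightarrow> b \<in> A \<Longrightarrow> h (pmeet2 A a b) = pmeet2 B (h a) (h b)"
  using hom unfolding bool_hom_sup_def by blast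
lemma hj2: "a \<in> A \<Longrightarrow> b \<in> A \<Longrightarrow> h (pjoin2 A a b) = pjoin2 B (h a) (h b)"
  using hom unfolding bool_hom_sup_def by blast
lemma hJ: "X \<subseteq> A \<Longrightarrow> h (pjoin A X) = pjoin B (h ` X)"
  using hom unfolding bool_hom_sup_def by blast

lemma hmono: assumes "a \<in> A" "b \<in> A" "a \<le> b" shows "h a \<le> h b"
proof -
  have "h a = h (pmeet2 A a b)" using A.m2_eq1 assms by simp
  also have "\<dots> = pmeet2 B (h a) (h b)" using hm2 assms by blast
  also have "\<dots> \<le> h b" using B.m2_lb2 hin assms by blast
  finally show ?thesis .
qed

lemma hneg: assumes a: "a \<in> A" shows "h (pneg A a) = pneg B (h a)"
proof -
  have na: "pneg A a \<in> A" using A.pneg_in .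
  have "pmeet2 B (h a) (h (pneg A a)) = pbot B" using hm2[OF a na] A.pneg_meet' a hbot by simp
  moreover have "pjoin2 B (h a) (h (pneg A a)) = ptop B" using hj2[OF a na] A.join_neg a htop by simp
  ultimately show ?thesis using B.compl_neg hin a na by blast
qed

definition D :: "'a set \<Rightarrow> 'b set" where "D I = {b\<in>B. \<exists>i\<in>I. b \<le> h i}"

lemma D_Idl: assumes I: "I \<in> Idl A" shows "D I \<in> Idl B"
proof (rule B.IdlI)
  note a = A.IdlD[OF I]
  show "D I \<subseteq> B" unfolding D_def by blast
  show "\<And>x y. x \<in> D I \<Longrightarrow> y \<in> B \<Longrightarrow> y \<le> x \<Longrightarrow> y \<in> D I"
  proof -
    fix x y assume "x \<in> D I" "y \<in> B" "y \<le> x"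
    then obtain i where i: "i \<in> I" "x \<le> h i" unfolding D_def by blast
    have "y \<le> h i" using \<open>y \<le> x\<close> i(2) by (rule order_trans)
    thus "y \<in> D I" unfolding D_def using i \<open>y \<in> B\<close> by blast
  qed
  show "pbot B \<in> D I" unfolding D_def using a(3) hbot B.bot_in by force
  fix x y assume "x \<in> D I" "y \<in> D I"
  then obtain i j where ij: "i \<in> I" "x \<le> h i" "j \<in> I" "y \<le> h j" "x \<in> B" "y \<in> B" unfolding D_def by blast
  have iA: "i \<in> A" "j \<in> A" using ij a(1) by auto
  have "pjoin2 B x y \<le> pjoin2 B (h i) (h j)" using ij iA hin by (intro B.j2_mono) auto
  also have "\<dots> = h (pjoin2 A i j)" using hj2 iA by simp
  finally show "pjoin2 B x y \<in> D I" unfolding D_def using a(4) ij B.j2_in by blast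
qed

lemma ideal_map_D: assumes I: "I \<in> Idl A" shows "ideal_map A B h I = D I"
proof -
  have "\<Inter>{J\<in>Idl B. h ` I \<subseteq> J} = D I"
  proof
    have "h ` I \<subseteq> D I" unfolding D_def using hin A.IdlD(1)[OF I] by blast
    thus "\<Inter>{J\<in>Idl B. h ` I \<subseteq> J} \<subseteq> D I" using D_Idl[OF I] by blast
    show "D I \<subseteq> \<Inter>{J\<in>Idl B. h ` I \<subseteq> J}"
    proof
      fix b assume "b \<in> D I"
      then obtain i where i: "b \<in> B" "i \<in> I" "b \<le> h i" unfolding D_def by blast
      show "b \<in> \<Inter>{J\<in>Idl B. h ` I \<subseteq> J}"
      proof
        fix J assume "J \<in> {J\<in>Idl B. h ` I \<subseteq> J}"
        hence J: "J \<in> Idl B" "h i \<in> J" using i by auto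
        thus "b \<in> J" using B.IdlD(2)[OF J(1)] i by blast
      qed
    qed
  qed
  thus ?thesis unfolding ideal_map_def .
qed

definition e :: "'b \<Rightarrow> 'a" where
  "e b = pneg A (pjoin A {a\<in>A. pmeet2 B (h a) b = pbot B})"

lemma e_in: "e b \<in> A" unfolding e_def by (rule A.pneg_in)

lemma e_le: assumes b: "b \<in> B" shows "b \<le> h (e b)"
proof -
  let ?C = "{a\<in>A. pmeet2 B (h a) b = pbot B}"
  have CA: "?C \<subseteq> A" by blast
  have c: "pjoin A ?C \<in> A" using A.J_in CA .
  have hC: "h ` ?C \<subseteq> B" using hin by blast
  have "pmeet2 B b (h (pjoin A ?C)) = pmeet2 B b (pjoin B (h ` ?C))" using hJ CA by simp
  also have "\<dots> = pjoin B ((\<lambda>x. pmeet2 B b x) ` h ` ?C)" using B.dist b hC by blast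
  also have "\<dots> \<le> pbot B"
  proof (rule B.J_least)
    show "(\<lambda>x. pmeet2 B b x) ` h ` ?C \<subseteq> B" using B.m2_in b hC by blast
    show "pbot B \<in> B" by (rule B.bot_in)
    fix y assume "y \<in> (\<lambda>x. pmeet2 B b x) ` h ` ?C"
    then obtain a where a: "a \<in> ?C" "y = pmeet2 B b (h a)" by blast
    have "pmeet2 B b (h a) = pmeet2 B (h a) b" by (rule B.m2_comm)
    thus "y \<le> pbot B" using a by simp
  qed
  finally have "pmeet2 B b (h (pjoin A ?C)) = pbot B"
    using B.le_bot_iff B.m2_in b hin c by blast
  hence "b \<le> pneg B (h (pjoin A ?C))" using B.pneg_char b hin c by blast
  thus ?thesis unfolding e_def using hneg c by simp
qed

lemma e_least: assumes b: "b \<in> B" and x: "x \<in> A" and le: "b \<le> h x" shows "e b \<le> x"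
proof -
  let ?C = "{a\<in>A. pmeet2 B (h a) b = pbot B}"
  have CA: "?C \<subseteq> A" by blast
  have nx: "pneg A x \<in> A" by (rule A.pneg_in)
  have "pmeet2 B (h (pneg A x)) b \<le> pmeet2 B (pneg B (h x)) (h x)"
    using hneg x le b hin B.pneg_in by (intro B.m2_mono) auto
  also have "\<dots> = pbot B" using B.pneg_meet hin x by blast
  finally have "pmeet2 B (h (pneg A x)) b = pbot B" using B.le_bot_iff B.m2_in hin nx b by blast
  hence "pneg A x \<in> ?C" using nx by blast
  hence "pneg A x \<le> pjoin A ?C" using A.J_ub CA by blast
  hence "pneg A (pjoin A ?C) \<le> pneg A (pneg A x)" using A.pneg_anti A.J_in CA nx by blast
  thus ?thesis unfolding e_def using A.nn x by simp
qed

lemma D_top: "D A = B"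
proof
  show "D A \<subseteq> B" unfolding D_def by blast
  show "B \<subseteq> D A"
  proof
    fix b assume "b \<in> B"
    hence "b \<le> h (ptop A)" using htop B.le_top by simp
    thus "b \<in> D A" unfolding D_def using \<open>b \<in> B\<close> A.top_in by blast
  qed
qed

lemma D_int: assumes I: "I \<in> Idl A" and J: "J \<in> Idl A" shows "D (I \<inter> J) = D I \<inter> D J"
proof
  show "D (I \<inter> J) \<subseteq> D I \<inter> D J" unfolding D_def by blast
  show "D I \<inter> D J \<subseteq> D (I \<inter> J)"
  proof
    fix b assume "b \<in> D I \<inter> D J"
    then obtain i j where ij: "b \<in> B" "i \<in> I" "b \<le> h i" "j \<in> J" "b \<le> h j" unfolding D_def by blast
    have iA: "i \<in> A" "j \<in> A" using ij A.IdlD(1)[OF I] A.IdlD(1)[OF J] by auto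
    have "b \<le> pmeet2 B (h i) (h j)" using ij B.le_m2_iff hin iA by blast
    hence "b \<le> h (pmeet2 A i j)" using hm2 iA by simp
    moreover have "pmeet2 A i j \<in> I \<inter> J"
      using A.IdlD(2)[OF I] A.IdlD(2)[OF J] ij A.m2_in iA A.m2_lb1 A.m2_lb2 by blast
    ultimately show "b \<in> D (I \<inter> J)" unfolding D_def using ij by blast
  qed
qed

lemma D_mono: "I \<subseteq> J \<Longrightarrow> D I \<subseteq> D J" unfolding D_def by blast

lemma D_gen: assumes X: "XX \<subseteq> Idl A" shows "D (A.gen (\<Union>XX)) = B.gen (\<Union>(D ` XX))"
proof
  have US: "\<Union>XX \<subseteq> A" using X A.IdlD(1) by blast
  show "D (A.gen (\<Union>XX)) \<subseteq> B.gen (\<Union>(D ` XX))"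
  proof
    fix b assume "b \<in> D (A.gen (\<Union>XX))"
    then obtain a where a: "b \<in> B" "a \<in> A.gen (\<Union>XX)" "b \<le> h a" unfolding D_def by blast
    then obtain F where F: "a \<in> A" "finite F" "F \<subseteq> \<Union>XX" "a \<le> pjoin A F" unfolding A.gen_def by blast
    have FA: "F \<subseteq> A" using F US by blast
    have "h a \<le> h (pjoin A F)" using hmono F A.J_in FA by blast
    also have "\<dots> = pjoin B (h ` F)" using hJ FA by blast
    finally have hb: "h a \<le> pjoin B (h ` F)" .
    have "b \<le> pjoin B (h ` F)" using a(3) hb by (rule order_trans)
    moreover have "h ` F \<subseteq> \<Union>(D ` XX)"
    proof
      fix y assume "y \<in> h ` F"
      then obtain f where f: "f \<in> F" "y = h f" by blast
      then obtain I where I: "I \<in> XX" "f \<in> I" using F by blast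
      have "y \<in> D I" unfolding D_def using f I hin FA by blast
      thus "y \<in> \<Union>(D ` XX)" using I by blast
    qed
    moreover have "finite (h ` F)" using F by blast
    ultimately show "b \<in> B.gen (\<Union>(D ` XX))" unfolding B.gen_def using a by blast
  qed
  show "B.gen (\<Union>(D ` XX)) \<subseteq> D (A.gen (\<Union>XX))"
  proof (rule B.gen_least)
    show "D (A.gen (\<Union>XX)) \<in> Idl B" using D_Idl A.gen_Idl US by blast
    show "\<Union>(D ` XX) \<subseteq> D (A.gen (\<Union>XX))"
      using D_mono A.gen_ub US by blast
  qed
qed

lemma D_meet: assumes X: "XX \<subseteq> Idl A" shows "D (A \<inter> \<Inter>XX) = B \<inter> \<Inter>(D ` XX)"
proof
  show "D (A \<inter> \<Inter>XX) \<subseteq> B \<inter> \<Inter>(D ` XX)" unfolding D_def by blast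
  show "B \<inter> \<Inter>(D ` XX) \<subseteq> D (A \<inter> \<Inter>XX)"
  proof
    fix b assume b: "b \<in> B \<inter> \<Inter>(D ` XX)"
    have "e b \<in> I" if I: "I \<in> XX" for I
    proof -
      obtain i where i: "i \<in> I" "b \<le> h i" using b I unfolding D_def by blast
      have iA: "i \<in> A" using i X I A.IdlD(1) by blast
      have "e b \<le> i" using e_least b iA i by blast
      thus ?thesis using A.IdlD(2)[of I] I X i e_in by blast
    qed
    thus "b \<in> D (A \<inter> \<Inter>XX)" unfolding D_def using b e_in e_le by blast
  qed
qed

lemma D_himp: assumes I: "I \<in> Idl A" and J: "J \<in> Idl A"
  shows "D {a\<in>A. \<forall>i\<in>I. pmeet2 A a i \<in> J} = {b\<in>B. \<forall>c\<in>D I. pmeet2 B b c \<in> D J}"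
proof
  note ia = A.IdlD[OF I] and ja = A.IdlD[OF J]
  show "D {a\<in>A. \<forall>i\<in>I. pmeet2 A a i \<in> J} \<subseteq> {b\<in>B. \<forall>c\<in>D I. pmeet2 B b c \<in> D J}"
  proof
    fix b assume "b \<in> D {a\<in>A. \<forall>i\<in>I. pmeet2 A a i \<in> J}"
    then obtain a where a: "b \<in> B" "a \<in> A" "\<forall>i\<in>I. pmeet2 A a i \<in> J" "b \<le> h a" unfolding D_def by blast
    have "pmeet2 B b c \<in> D J" if c: "c \<in> D I" for c
    proof -
      obtain i where i: "c \<in> B" "i \<in> I" "c \<le> h i" using c unfolding D_def by blast
      have iA: "i \<in> A" using i ia by blast
      have "pmeet2 B b c \<le> pmeet2 B (h a) (h i)" using a i hin iA by (intro B.m2_mono) auto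
      also have "\<dots> = h (pmeet2 A a i)" using hm2 a iA by simp
      finally show ?thesis unfolding D_def using a i B.m2_in by blast
    qed
    thus "b \<in> {b\<in>B. \<forall>c\<in>D I. pmeet2 B b c \<in> D J}" using a by blast
  qed
  show "{b\<in>B. \<forall>c\<in>D I. pmeet2 B b c \<in> D J} \<subseteq> D {a\<in>A. \<forall>i\<in>I. pmeet2 A a i \<in> J}"
  proof
    fix b assume b: "b \<in> {b\<in>B. \<forall>c\<in>D I. pmeet2 B b c \<in> D J}"
    have bB: "b \<in> B" using b by blast
    have "pmeet2 A (e b) i \<in> J" if i: "i \<in> I" for i
    proof -
      have iA: "i \<in> A" using i ia by blast
      have "h i \<in> D I" unfolding D_def using i hin iA by blast
      hence "pmeet2 B b (h i) \<in> D J" using b by blast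
      then obtain j where j: "j \<in> J" "pmeet2 B b (h i) \<le> h j" unfolding D_def by blast
      have jA: "j \<in> A" using j ja by blast
      have ni: "pneg A i \<in> A" by (rule A.pneg_in)
      have hi: "h i \<in> B" "h j \<in> B" "pneg B (h i) \<in> B" using hin iA jA B.pneg_in by auto
      have "b = pmeet2 B b (pjoin2 B (h i) (pneg B (h i)))" using B.join_neg hi B.m2_top bB by simp
      also have "\<dots> = pjoin2 B (pmeet2 B b (h i)) (pmeet2 B b (pneg B (h i)))" using B.dist2 bB hi by blast
      also have "\<dots> \<le> pjoin2 B (h j) (pneg B (h i))"
        using j hi bB B.m2_in B.m2_lb2 by (intro B.j2_mono) auto
      also have "\<dots> = h (pjoin2 A j (pneg A i))" using hj2 jA ni hneg iA by simp
      finally have "b \<le> h (pjoin2 A j (pneg A i))" .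
      hence le: "e b \<le> pjoin2 A j (pneg A i)" using e_least bB A.j2_in jA ni by blast
      have "pmeet2 A (e b) i \<le> pmeet2 A i (pjoin2 A j (pneg A i))"
        using le e_in iA A.j2_in jA ni A.m2_mono[of "e b" i "pjoin2 A j (pneg A i)" i] A.m2_comm
        by (metis order_refl)
      also have "\<dots> = pjoin2 A (pmeet2 A i j) (pmeet2 A i (pneg A i))" using A.dist2 iA jA ni by blast
      also have "\<dots> = pmeet2 A i j" using A.pneg_meet' iA A.j2_bot' A.m2_in jA by simp
      also have "\<dots> \<le> j" using A.m2_lb2 iA jA by blast
      finally have "pmeet2 A (e b) i \<le> j" .
      thus ?thesis using ja(2) j A.m2_in e_in iA by blast
    qed
    hence "e b \<in> {a\<in>A. \<forall>i\<in>I. pmeet2 A a i \<in> J}" using e_in by blast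
    thus "b \<in> D {a\<in>A. \<forall>i\<in>I. pmeet2 A a i \<in> J}" unfolding D_def using bB e_le by blast
  qed
qed

lemma ideal_map_open: "open_frame_hom (Idl A) (Idl B) (ideal_map A B h)"
proof -
  interpret IA: frm "Idl A" by (rule A.Idl_frm)
  interpret IB: frm "Idl B" by (rule B.Idl_frm)
  have im: "\<And>X. X \<subseteq> Idl A \<Longrightarrow> ideal_map A B h ` X = D ` X" using ideal_map_D by auto
  show ?thesis
  proof (rule ofhI)
    show "\<And>x. x \<in> Idl A \<Longrightarrow> ideal_map A B h x \<in> Idl B" using ideal_map_D D_Idl by simp
    show "ideal_map A B h (ptop (Idl A)) = ptop (Idl B)"
      using ideal_map_D A.idl_top B.idl_top D_top A.S_Idl by simp
    show "\<And>a b. a \<in> Idl A \<Longrightarrow> b \<in> Idl A \<Longrightarrow> ideal_map A B h (pmeet2 (Idl A) a b) = pmeet2 (Idl B) (ideal_map A B h a) (ideal_map A B h b)"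
      using ideal_map_D A.idl_m2 B.idl_m2 D_int A.Idl_int D_Idl by simp
    show "\<And>X. X \<subseteq> Idl A \<Longrightarrow> ideal_map A B h (pjoin (Idl A) X) = pjoin (Idl B) (ideal_map A B h ` X)"
    proof -
      fix X assume X: "X \<subseteq> Idl A"
      have DX: "D ` X \<subseteq> Idl B" using D_Idl X by blast
      show "ideal_map A B h (pjoin (Idl A) X) = pjoin (Idl B) (ideal_map A B h ` X)"
        using ideal_map_D[OF IA.J_in[OF X]] A.idl_join[OF X] B.idl_join[OF DX] im[OF X] D_gen[OF X] by simp
    qed
    show "\<And>X. X \<subseteq> Idl A \<Longrightarrow> ideal_map A B h (pmeet (Idl A) X) = pmeet (Idl B) (ideal_map A B h ` X)"
    proof -
      fix X assume X: "X \<subseteq> Idl A"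
      have DX: "D ` X \<subseteq> Idl B" using D_Idl X by blast
      show "ideal_map A B h (pmeet (Idl A) X) = pmeet (Idl B) (ideal_map A B h ` X)"
        using ideal_map_D[OF IA.M_in[OF X]] A.idl_meet[OF X] B.idl_meet[OF DX] im[OF X] D_meet[OF X] by simp
    qed
    show "\<And>a b. a \<in> Idl A \<Longrightarrow> b \<in> Idl A \<Longrightarrow> ideal_map A B h (himp (Idl A) a b) = himp (Idl B) (ideal_map A B h a) (ideal_map A B h b)"
    proof -
      fix I J assume I: "I \<in> Idl A" and J: "J \<in> Idl A"
      show "ideal_map A B h (himp (Idl A) I J) = himp (Idl B) (ideal_map A B h I) (ideal_map A B h J)"
        using ideal_map_D[OF IA.himp_in[of I J]] ideal_map_D[OF I] ideal_map_D[OF J] A.idl_himp[OF I J]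
          B.idl_himp[OF D_Idl[OF I] D_Idl[OF J]] D_himp[OF I J] by simp
    qed
  qed
qed

end



lemma cvD:
  assumes "cont_valuation S \<nu>"
  shows "\<And>x. x \<in> S \<Longrightarrow> 0 \<le> \<nu> x" "\<nu> (pbot S) = 0"
    "\<And>a b. a \<in> S \<Longrightarrow> b \<in> S \<Longrightarrow> \<nu> (pjoin2 S a b) + \<nu> (pmeet2 S a b) = \<nu> a + \<nu> b"
    "\<And>a b. a \<in> S \<Longrightarrow> b \<in> S \<Longrightarrow> a \<le> b \<Longrightarrow> \<nu> a \<le> \<nu> b"
    "\<And>D. directed_in S D \<Longrightarrow> \<nu> (pjoin S D) = (SUP d\<in>D. \<nu> d)"
  using assms unfolding cont_valuation_def by simp_all

lemma cvI:
  assumes "\<And>x. x \<in> S \<Longrightarrow> 0 \<le> \<nu> x" "\<nu> (pbot S) = 0"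
    "\<And>a b. a \<in> S \<Longrightarrow> b \<in> S \<Longrightarrow> \<nu> (pjoin2 S a b) + \<nu> (pmeet2 S a b) = \<nu> a + \<nu> b"
    "\<And>a b. a \<in> S \<Longrightarrow> b \<in> S \<Longrightarrow> a \<le> b \<Longrightarrow> \<nu> a \<le> \<nu> b"
    "\<And>D. directed_in S D \<Longrightarrow> \<nu> (pjoin S D) = (SUP d\<in>D. \<nu> d)"
  shows "cont_valuation S \<nu>"
  using assms unfolding cont_valuation_def by simp

lemma directed_inD:
  assumes "directed_in S D"
  shows "D \<subseteq> S" "D \<noteq> {}" "\<And>a b. a \<in> D \<Longrightarrow> b \<in> D \<Longrightarrow> \<exists>c\<in>D. a \<le> c \<and> b \<le> c"
  using assms unfolding directed_in_def by blast+

context cba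
begin

lemma m2_m2: assumes "l \<in> S" "x \<in> S" "y \<in> S"
  shows "pmeet2 S l (pmeet2 S x y) = pmeet2 S (pmeet2 S l x) (pmeet2 S l y)"
proof -
  have i: "z \<le> pmeet2 S l (pmeet2 S x y) \<longleftrightarrow> z \<le> pmeet2 S (pmeet2 S l x) (pmeet2 S l y)" if "z \<in> S" for z
    using assms that by (auto simp: le_m2_iff m2_in)
  show ?thesis using i[of "pmeet2 S l (pmeet2 S x y)"] i[of "pmeet2 S (pmeet2 S l x) (pmeet2 S l y)"] assms
    by (simp add: m2_in antisym)
qed

lemma dn_sub_lub: assumes l: "l \<in> S" and Y: "Y \<subseteq> dn l" shows "pjoin (dn l) Y = pjoin S Y"
proof -
  have YS: "Y \<subseteq> S" using Y unfolding dn_def by blast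
  have "\<And>y. y \<in> Y \<Longrightarrow> y \<le> l" using Y unfolding dn_def by blast
  hence "pjoin S Y \<le> l" using J_least[OF YS l] by blast
  hence inl: "pjoin S Y \<in> dn l" unfolding dn_def using J_in[OF YS] by blast
  have sub: "dn l \<subseteq> S" unfolding dn_def by blast
  have "p_is_lub (dn l) Y (pjoin S Y)" using sub_lub[OF sub lub[OF YS] inl] .
  thus ?thesis by (rule pjoin_eqI)
qed

lemma dn_j2: "l \<in> S \<Longrightarrow> x \<in> dn l \<Longrightarrow> y \<in> dn l \<Longrightarrow> pjoin2 (dn l) x y = pjoin2 S x y"
  unfolding pjoin2_def by (rule dn_sub_lub) auto

lemma dn_bot: "l \<in> S \<Longrightarrow> pbot (dn l) = pbot S"
  unfolding pbot_def by (rule dn_sub_lub) auto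

lemma dn_m2: assumes l: "l \<in> S" and x: "x \<in> dn l" and y: "y \<in> dn l" shows "pmeet2 (dn l) x y = pmeet2 S x y"
proof -
  have xy: "x \<in> S" "y \<in> S" "x \<le> l" using x y unfolding dn_def by auto
  have "pmeet2 S x y \<le> l" using m2_lb1[of x y] xy order_trans by blast
  hence inl: "pmeet2 S x y \<in> dn l" unfolding dn_def using m2_in xy by blast
  have sub: "dn l \<subseteq> S" unfolding dn_def by blast
  have "p_is_glb S {x,y} (pmeet2 S x y)" unfolding pmeet2_def[of S] using xy by (intro glb) auto
  hence "p_is_glb (dn l) {x,y} (pmeet2 S x y)" using sub_glb[OF sub _ inl] by blast
  thus ?thesis unfolding pmeet2_def[of "dn l"] by (rule pmeet_eqI)
qed

lemma idl_directed: assumes D: "directed_in (Idl S) DD" shows "pjoin (Idl S) DD = \<Union>DD"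
proof -
  note d = directed_inD[OF D]
  show ?thesis
  proof (rule pjoin_eqI2)
    show "\<Union>DD \<in> Idl S"
    proof (rule IdlI)
      show "\<Union>DD \<subseteq> S" using d(1) IdlD(1) by blast
      show "\<And>x y. x \<in> \<Union>DD \<Longrightarrow> y \<in> S \<Longrightarrow> y \<le> x \<Longrightarrow> y \<in> \<Union>DD"
        using d(1) IdlD(2) by blast
      obtain D0 where "D0 \<in> DD" using d(2) by blast
      thus "pbot S \<in> \<Union>DD" using d(1) IdlD(3) by blast
      fix x y assume "x \<in> \<Union>DD" "y \<in> \<Union>DD"
      then obtain X Y where XY: "X \<in> DD" "Y \<in> DD" "x \<in> X" "y \<in> Y" by blast
      then obtain Z where Z: "Z \<in> DD" "X \<subseteq> Z" "Y \<subseteq> Z" using d(3) by blast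
      have "pjoin2 S x y \<in> Z" using IdlD(4)[of Z] Z d(1) XY by blast
      thus "pjoin2 S x y \<in> \<Union>DD" using Z by blast
    qed
    show "\<And>y. y \<in> DD \<Longrightarrow> y \<le> \<Union>DD" by blast
    show "\<And>z. z \<in> Idl S \<Longrightarrow> \<forall>y\<in>DD. y \<le> z \<Longrightarrow> \<Union>DD \<le> z" by blast
  qed
qed

lemma J_idl_j2: assumes I: "I \<in> Idl S" and J: "J \<in> Idl S"
  shows "pjoin S (pjoin2 (Idl S) I J) = pjoin2 S (pjoin S I) (pjoin S J)"
proof -
  have IS: "I \<subseteq> S" "J \<subseteq> S" using IdlD(1) I J by auto
  have JI: "pjoin S I \<in> S" "pjoin S J \<in> S" using J_in IS by auto
  let ?K = "{a\<in>S. \<exists>i\<in>I. \<exists>j\<in>J. a \<le> pjoin2 S i j}"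
  have KS: "?K \<subseteq> S" by blast
  have IK: "I \<subseteq> ?K"
  proof
    fix x assume x: "x \<in> I"
    hence "x \<le> pjoin2 S x (pbot S)" using j2_ub1 IS bot_in by blast
    thus "x \<in> ?K" using x IS IdlD(3)[OF J] by blast
  qed
  have JK: "J \<subseteq> ?K"
  proof
    fix x assume x: "x \<in> J"
    hence "x \<le> pjoin2 S (pbot S) x" using j2_ub2 IS bot_in by blast
    thus "x \<in> ?K" using x IS IdlD(3)[OF I] by blast
  qed
  have "pjoin S ?K = pjoin2 S (pjoin S I) (pjoin S J)"
  proof (rule antisym)
    show "pjoin S ?K \<le> pjoin2 S (pjoin S I) (pjoin S J)"
    proof (rule J_least[OF KS])
      show "pjoin2 S (pjoin S I) (pjoin S J) \<in> S" using j2_in JI by blast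
      fix x assume "x \<in> ?K"
      then obtain i j where ij: "x \<in> S" "i \<in> I" "j \<in> J" "x \<le> pjoin2 S i j" by blast
      have "pjoin2 S i j \<le> pjoin2 S (pjoin S I) (pjoin S J)"
        using ij IS JI J_ub by (intro j2_mono) auto
      thus "x \<le> pjoin2 S (pjoin S I) (pjoin S J)" using ij(4) by (rule order_trans[rotated])
    qed
    have "pjoin S I \<le> pjoin S ?K" "pjoin S J \<le> pjoin S ?K" using J_mono IK JK KS by auto
    thus "pjoin2 S (pjoin S I) (pjoin S J) \<le> pjoin S ?K" using j2_le_iff JI J_in KS by blast
  qed
  thus ?thesis using idl_j2[OF I J] by simp
qed

lemma J_idl_m2: assumes I: "I \<in> Idl S" and J: "J \<in> Idl S"
  shows "pjoin S (pmeet2 (Idl S) I J) = pmeet2 S (pjoin S I) (pjoin S J)"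
proof -
  have IS: "I \<subseteq> S" "J \<subseteq> S" using IdlD(1) I J by auto
  have JI: "pjoin S I \<in> S" "pjoin S J \<in> S" using J_in IS by auto
  have IJS: "I \<inter> J \<subseteq> S" using IS by blast
  have JIJ: "pjoin S (I \<inter> J) \<in> S" using J_in IJS .
  have "pjoin S (I \<inter> J) = pmeet2 S (pjoin S I) (pjoin S J)"
  proof (rule antisym)
    have "pjoin S (I \<inter> J) \<le> pjoin S I" "pjoin S (I \<inter> J) \<le> pjoin S J" using J_mono IS by auto
    thus "pjoin S (I \<inter> J) \<le> pmeet2 S (pjoin S I) (pjoin S J)" using le_m2_iff JI JIJ by blast
    have "pmeet2 S (pjoin S I) (pjoin S J) = pmeet2 S (pjoin S J) (pjoin S I)" by (rule m2_comm)
    also have "\<dots> = pjoin S ((\<lambda>i. pmeet2 S (pjoin S J) i) ` I)" using dist JI IS by blast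
    also have "\<dots> \<le> pjoin S (I \<inter> J)"
    proof (rule J_least)
      show "(\<lambda>i. pmeet2 S (pjoin S J) i) ` I \<subseteq> S" using m2_in JI IS by blast
      show "pjoin S (I \<inter> J) \<in> S" by fact
      fix y assume "y \<in> (\<lambda>i. pmeet2 S (pjoin S J) i) ` I"
      then obtain i where i: "i \<in> I" "y = pmeet2 S (pjoin S J) i" by blast
      have iS: "i \<in> S" using i IS by blast
      have "y = pmeet2 S i (pjoin S J)" using i(2) m2_comm[of "pjoin S J" i] by simp
      also have "\<dots> = pjoin S ((\<lambda>j. pmeet2 S i j) ` J)" using dist iS IS by blast
      also have "\<dots> \<le> pjoin S (I \<inter> J)"
      proof (rule J_least)
        show "(\<lambda>j. pmeet2 S i j) ` J \<subseteq> S" using m2_in iS IS by blast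
        show "pjoin S (I \<inter> J) \<in> S" by fact
        fix z assume "z \<in> (\<lambda>j. pmeet2 S i j) ` J"
        then obtain j where j: "j \<in> J" "z = pmeet2 S i j" by blast
        have jS: "j \<in> S" using j IS by blast
        have "z \<in> I \<inter> J" using IdlD(2)[OF I] IdlD(2)[OF J] i j m2_in iS jS m2_lb1 m2_lb2 by blast
        thus "z \<le> pjoin S (I \<inter> J)" using J_ub IJS by blast
      qed
      finally show "y \<le> pjoin S (I \<inter> J)" .
    qed
    finally show "pmeet2 S (pjoin S I) (pjoin S J) \<le> pjoin S (I \<inter> J)" .
  qed
  thus ?thesis using idl_m2[OF I J] by simp
qed

lemma val_Idl:
  assumes l: "l \<in> S" and mu: "cont_valuation (dn l) \<mu>"
  shows "cont_valuation (Idl S) (\<lambda>I. \<mu> (pmeet2 S l (pjoin S I)))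
       \<and> normal_valuation (Idl S) (\<lambda>I. \<mu> (pmeet2 S l (pjoin S I)))"
proof -
  note m = cvD[OF mu]
  define \<nu> where "\<nu> I = \<mu> (pmeet2 S l (pjoin S I))" for I
  have inL: "pmeet2 S l x \<in> dn l" if "x \<in> S" for x
    unfolding dn_def using m2_in m2_lb1 l that by blast
  have JI: "I \<in> Idl S \<Longrightarrow> pjoin S I \<in> S" for I using J_in IdlD(1) by blast
  have mono: "\<nu> I \<le> \<nu> J" if "I \<in> Idl S" "J \<in> Idl S" "I \<subseteq> J" for I J
  proof -
    have "pjoin S I \<le> pjoin S J" using J_mono that IdlD(1) by blast
    hence "pmeet2 S l (pjoin S I) \<le> pmeet2 S l (pjoin S J)" using l JI that by (intro m2_mono) auto
    thus ?thesis unfolding \<nu>_def using m(4) inL JI that by blast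
  qed
  have bnd: "\<nu> I \<le> \<mu> l" if "I \<in> Idl S" for I
  proof -
    have "l \<in> dn l" unfolding dn_def using l by blast
    thus ?thesis unfolding \<nu>_def using m(4) inL JI that m2_lb1 l by blast
  qed
  have cv: "cont_valuation (Idl S) \<nu>"
  proof (rule cvI)
    show "\<And>x. x \<in> Idl S \<Longrightarrow> 0 \<le> \<nu> x" unfolding \<nu>_def using m(1) inL JI by blast
    have "pjoin S {pbot S} = pbot S" using J_in bot_in by (intro pjoin_max) auto
    hence "pmeet2 S l (pjoin S {pbot S}) = pbot (dn l)" using m2_bot l dn_bot by simp
    thus "\<nu> (pbot (Idl S)) = 0" unfolding \<nu>_def idl_bot using m(2) by simp
  next
    fix I J assume I: "I \<in> Idl S" and J: "J \<in> Idl S"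
    let ?x = "pjoin S I" and ?y = "pjoin S J"
    have xy: "?x \<in> S" "?y \<in> S" using JI I J by auto
    have a: "pmeet2 S l ?x \<in> dn l" "pmeet2 S l ?y \<in> dn l" using inL xy by auto
    have "\<nu> (pjoin2 (Idl S) I J) = \<mu> (pjoin2 S (pmeet2 S l ?x) (pmeet2 S l ?y))"
      unfolding \<nu>_def J_idl_j2[OF I J] using dist2 l xy by simp
    also have "\<dots> = \<mu> (pjoin2 (dn l) (pmeet2 S l ?x) (pmeet2 S l ?y))" using dn_j2 l a by simp
    finally have 1: "\<nu> (pjoin2 (Idl S) I J) = \<mu> (pjoin2 (dn l) (pmeet2 S l ?x) (pmeet2 S l ?y))" .
    have "\<nu> (pmeet2 (Idl S) I J) = \<mu> (pmeet2 S (pmeet2 S l ?x) (pmeet2 S l ?y))"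
      unfolding \<nu>_def J_idl_m2[OF I J] using m2_m2 l xy by simp
    also have "\<dots> = \<mu> (pmeet2 (dn l) (pmeet2 S l ?x) (pmeet2 S l ?y))" using dn_m2 l a by simp
    finally have 2: "\<nu> (pmeet2 (Idl S) I J) = \<mu> (pmeet2 (dn l) (pmeet2 S l ?x) (pmeet2 S l ?y))" .
    show "\<nu> (pjoin2 (Idl S) I J) + \<nu> (pmeet2 (Idl S) I J) = \<nu> I + \<nu> J"
      unfolding 1 2 using m(3)[OF a] unfolding \<nu>_def by simp
  next
    fix I J assume "I \<in> Idl S" "J \<in> Idl S" "I \<le> J"
    thus "\<nu> I \<le> \<nu> J" using mono by blast
  next
    fix DD assume D: "directed_in (Idl S) DD"
    note d = directed_inD[OF D]
    let ?U = "\<Union>DD"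
    have U: "pjoin (Idl S) DD = ?U" using idl_directed D .
    have "pjoin (Idl S) DD \<in> Idl S" using cl.J_in[OF cl.intro[OF Idl_complete] d(1)] .
    hence UI: "?U \<in> Idl S" using U by simp
    have US: "?U \<subseteq> S" using IdlD(1)[OF UI] .
    let ?Y = "(\<lambda>u. pmeet2 S l u) ` ?U"
    have YL: "?Y \<subseteq> dn l" using inL US by blast
    have Yne: "?Y \<noteq> {}" using IdlD(3)[OF UI] by blast
    have Ydir: "directed_in (dn l) ?Y" unfolding directed_in_def
    proof (intro conjI ballI)
      show "?Y \<subseteq> dn l" "?Y \<noteq> {}" by fact+
      fix a b assume "a \<in> ?Y" "b \<in> ?Y"
      then obtain u v where uv: "u \<in> ?U" "v \<in> ?U" "a = pmeet2 S l u" "b = pmeet2 S l v" by blast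
      have uvS: "u \<in> S" "v \<in> S" using uv US by auto
      have w: "pjoin2 S u v \<in> ?U" using IdlD(4)[OF UI] uv by blast
      have "a \<le> pmeet2 S l (pjoin2 S u v)" "b \<le> pmeet2 S l (pjoin2 S u v)"
        using uv uvS l j2_in j2_ub1 j2_ub2 by (auto intro!: m2_mono)
      thus "\<exists>c\<in>?Y. a \<le> c \<and> b \<le> c" using w by blast
    qed
    have "pmeet2 S l (pjoin S ?U) = pjoin S ?Y" using dist l US by blast
    also have "\<dots> = pjoin (dn l) ?Y" using dn_sub_lub l YL by simp
    finally have eq: "\<nu> ?U = (SUP y\<in>?Y. \<mu> y)" unfolding \<nu>_def using m(5)[OF Ydir] by simp
    have bdd: "bdd_above (\<nu> ` DD)" using bnd d(1) by (intro bdd_aboveI2) blast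
    have le1: "(SUP y\<in>?Y. \<mu> y) \<le> (SUP D\<in>DD. \<nu> D)"
    proof (rule cSUP_least[OF Yne])
      fix y assume "y \<in> ?Y"
      then obtain u D where uD: "D \<in> DD" "u \<in> D" "y = pmeet2 S l u" by blast
      have DI: "D \<in> Idl S" using uD d(1) by blast
      have uS: "u \<in> S" using uD IdlD(1)[OF DI] by blast
      have "u \<le> pjoin S D" using J_ub IdlD(1)[OF DI] uD by blast
      hence "y \<le> pmeet2 S l (pjoin S D)" using uD l uS JI[OF DI] by (auto intro!: m2_mono)
      hence "\<mu> y \<le> \<nu> D" unfolding \<nu>_def using m(4) inL uS JI[OF DI] uD by blast
      also have "\<nu> D \<le> (SUP D\<in>DD. \<nu> D)" using cSUP_upper[OF uD(1) bdd] .
      finally show "\<mu> y \<le> (SUP D\<in>DD. \<nu> D)" .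
    qed
    have le2: "(SUP D\<in>DD. \<nu> D) \<le> \<nu> ?U"
    proof (rule cSUP_least[OF d(2)])
      fix D assume D: "D \<in> DD"
      show "\<nu> D \<le> \<nu> ?U" using mono[of D ?U] D d(1) UI by blast
    qed
    show "\<nu> (pjoin (Idl S) DD) = (SUP D\<in>DD. \<nu> D)" unfolding U using eq le1 le2 by linarith
  qed
  have nv: "normal_valuation (Idl S) \<nu>"
    unfolding normal_valuation_def
  proof
    fix I assume I: "I \<in> Idl S"
    show "\<nu> (pneg (Idl S) (pneg (Idl S) I)) = \<nu> I" unfolding \<nu>_def nn_pj[OF I] using J_dn JI I by simp
  qed
  show ?thesis using cv nv unfolding \<nu>_def by simp
qed

lemma loc_hyper: assumes loc: "localizable S" shows "hyperstonean (Idl S)"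
proof -
  interpret I: ston "Idl S" by (rule Idl_ston)
  have st: "stonean (Idl S)" unfolding stonean_def using frm_frame[OF Idl_frm] I.coh I.reg I.ed by blast
  let ?L = "{a\<in>S. \<exists>\<nu>. cont_valuation {b\<in>S. b \<le> a} \<nu> \<and> (\<forall>b\<in>S. b \<le> a \<longrightarrow> \<nu> b = 0 \<longrightarrow> b = pbot S)}"
  have top: "ptop S = pjoin S ?L" using loc unfolding localizable_def by blast
  have LS: "?L \<subseteq> S" by blast
  have "\<exists>\<nu>. cont_valuation (Idl S) \<nu> \<and> normal_valuation (Idl S) \<nu> \<and> \<nu> K \<noteq> 0"
    if K: "K \<in> Idl S" "K \<noteq> pbot (Idl S)" for K
  proof -
    have KS: "K \<subseteq> S" using IdlD(1)[OF K(1)] .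
    have "K \<noteq> {pbot S}" using K(2) idl_bot by simp
    then obtain a where a: "a \<in> K" "a \<noteq> pbot S" using IdlD(3)[OF K(1)] by blast
    have aS: "a \<in> S" using a KS by blast
    have "\<exists>l\<in>?L. pmeet2 S l a \<noteq> pbot S"
    proof (rule ccontr)
      assume nt: "\<not> ?thesis"
      have z: "\<forall>l\<in>?L. pmeet2 S a l = pbot S"
      proof
        fix l assume "l \<in> ?L"
        hence "pmeet2 S l a = pbot S" using nt by blast
        thus "pmeet2 S a l = pbot S" using m2_comm[of l a] by simp
      qed
      have "a = pmeet2 S a (ptop S)" using m2_top aS by simp
      also have "\<dots> = pjoin S ((\<lambda>l. pmeet2 S a l) ` ?L)" using top dist aS LS by simp
      also have "\<dots> \<le> pbot S"
      proof (rule J_least)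
        show "(\<lambda>l. pmeet2 S a l) ` ?L \<subseteq> S" using m2_in aS LS by blast
        show "pbot S \<in> S" by (rule bot_in)
        fix y assume "y \<in> (\<lambda>l. pmeet2 S a l) ` ?L"
        thus "y \<le> pbot S" using z by auto
      qed
      finally show False using a le_bot_iff aS by blast
    qed
    then obtain l where l0: "l \<in> ?L" "pmeet2 S l a \<noteq> pbot S" by blast
    then obtain \<mu> where mu0: "cont_valuation {b\<in>S. b \<le> l} \<mu>" "\<forall>b\<in>S. b \<le> l \<longrightarrow> \<mu> b = 0 \<longrightarrow> b = pbot S"
      by blast
    have dnl: "{b\<in>S. b \<le> l} = dn l" unfolding dn_def ..
    have l: "l \<in> S" "cont_valuation (dn l) \<mu>" "\<forall>b\<in>S. b \<le> l \<longrightarrow> \<mu> b = 0 \<longrightarrow> b = pbot S"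
      "pmeet2 S l a \<noteq> pbot S" using l0 mu0 dnl by auto
    note v = val_Idl[OF l(1,2)]
    have la: "pmeet2 S l a \<in> dn l" unfolding dn_def using m2_in[OF l(1) aS] m2_lb1[OF l(1) aS] by blast
    have JK: "pjoin S K \<in> S" using J_in KS .
    have lK: "pmeet2 S l (pjoin S K) \<in> dn l" unfolding dn_def using m2_in[OF l(1) JK] m2_lb1[OF l(1) JK] by blast
    have "pmeet2 S l a \<in> S" "pmeet2 S l a \<le> l" using la unfolding dn_def by auto
    hence "\<mu> (pmeet2 S l a) \<noteq> 0" using l(3,4) by blast
    moreover have "0 \<le> \<mu> (pmeet2 S l a)" using cvD(1)[OF l(2)] la by blast
    moreover have "\<mu> (pmeet2 S l a) \<le> \<mu> (pmeet2 S l (pjoin S K))"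
    proof -
      have "a \<le> pjoin S K" using J_ub KS a by blast
      hence "pmeet2 S l a \<le> pmeet2 S l (pjoin S K)" using l aS J_in KS by (intro m2_mono) auto
      thus ?thesis using cvD(4)[OF l(2)] la lK by blast
    qed
    ultimately have "\<mu> (pmeet2 S l (pjoin S K)) \<noteq> 0" by linarith
    thus ?thesis using v by (intro exI[where x="\<lambda>I. \<mu> (pmeet2 S l (pjoin S I))"]) simp
  qed
  thus ?thesis unfolding hyperstonean_def using st by blast
qed

end



context ston
begin

lemma sub_dn_facts:
  assumes s: "s \<in> B"
  shows "\<And>x y. x \<in> {b\<in>B. b \<le> s} \<Longrightarrow> y \<in> {b\<in>B. b \<le> s} \<Longrightarrow> pjoin2 {b\<in>B. b \<le> s} x y = pjoin2 S x y"
    "\<And>x y. x \<in> {b\<in>B. b \<le> s} \<Longrightarrow> y \<in> {b\<in>B. b \<le> s} \<Longrightarrow> pmeet2 {b\<in>B. b \<le> s} x y = pmeet2 S x y"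
    "pbot {b\<in>B. b \<le> s} = pbot S"
    "\<And>D. D \<subseteq> {b\<in>B. b \<le> s} \<Longrightarrow> pjoin {b\<in>B. b \<le> s} D = pneg S (pneg S (pjoin S D))"
proof -
  let ?L = "{b\<in>B. b \<le> s}"
  have LS: "?L \<subseteq> S" using B_sub by blast
  have sS: "s \<in> S" using s B_sub by blast
  show "pjoin2 ?L x y = pjoin2 S x y" if "x \<in> ?L" "y \<in> ?L" for x y
  proof -
    have xy: "x \<in> B" "y \<in> B" "x \<le> s" "y \<le> s" "x \<in> S" "y \<in> S" using that B_sub by auto
    have "pjoin2 S x y \<le> s" using j2_le_iff xy sS by blast
    hence inl: "pjoin2 S x y \<in> ?L" using join_B xy by blast
    have "p_is_lub S {x,y} (pjoin2 S x y)" unfolding pjoin2_def[of S] using xy by (intro lub) auto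
    hence "p_is_lub ?L {x,y} (pjoin2 S x y)" using sub_lub[OF LS _ inl] by blast
    thus ?thesis unfolding pjoin2_def[of ?L] by (rule pjoin_eqI)
  qed
  show "pmeet2 ?L x y = pmeet2 S x y" if "x \<in> ?L" "y \<in> ?L" for x y
  proof -
    have xy: "x \<in> B" "y \<in> B" "x \<le> s" "y \<le> s" "x \<in> S" "y \<in> S" using that B_sub by auto
    have "pmeet2 S x y \<le> s" using m2_lb1[of x y] xy order_trans by blast
    hence inl: "pmeet2 S x y \<in> ?L" using meet_B xy by blast
    have "p_is_glb S {x,y} (pmeet2 S x y)" unfolding pmeet2_def[of S] using xy by (intro glb) auto
    hence "p_is_glb ?L {x,y} (pmeet2 S x y)" using sub_glb[OF LS _ inl] by blast
    thus ?thesis unfolding pmeet2_def[of ?L] by (rule pmeet_eqI)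
  qed
  show "pbot ?L = pbot S"
  proof -
    have inl: "pbot S \<in> ?L" using bot_B bot_le sS by blast
    have "p_is_lub S {} (pbot S)" unfolding pbot_def[of S] by (intro lub) auto
    hence "p_is_lub ?L {} (pbot S)" using sub_lub[OF LS _ inl] by blast
    thus ?thesis unfolding pbot_def[of ?L] by (rule pjoin_eqI)
  qed
  show "pjoin ?L D = pneg S (pneg S (pjoin S D))" if D: "D \<subseteq> ?L" for D
  proof -
    have DB: "D \<subseteq> B" using D by blast
    have DS: "D \<subseteq> S" using DB B_sub by blast
    have ub: "\<And>x. x \<in> D \<Longrightarrow> x \<le> s" using D by blast
    have JD: "pjoin S D \<in> S" using J_in DS .
    have "pjoin S D \<le> s" using J_least[OF DS sS ub] .
    hence "pneg S s \<le> pneg S (pjoin S D)" using pneg_anti[OF JD sS] by blast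
    hence "pneg S (pneg S (pjoin S D)) \<le> pneg S (pneg S s)" using pneg_anti[OF pneg_in pneg_in] by blast
    hence "pneg S (pneg S (pjoin S D)) \<le> s" using nn_B s by simp
    hence inl: "pneg S (pneg S (pjoin S D)) \<in> ?L" using neg_B pneg_in by blast
    have "p_is_lub ?L D (pneg S (pneg S (pjoin S D)))" using sub_lub[OF _ B_lub[OF DB] inl] by blast
    thus ?thesis by (rule pjoin_eqI)
  qed
qed

lemma ston_localizable:
  assumes hv: "\<forall>a\<in>S. a \<noteq> pbot S \<longrightarrow> (\<exists>\<nu>. cont_valuation S \<nu> \<and> normal_valuation S \<nu> \<and> \<nu> a \<noteq> 0)"
  shows "localizable B"
proof -
  interpret b: cba B by (rule B_cba)
  let ?Loc = "{a\<in>B. \<exists>\<nu>. cont_valuation {b\<in>B. b \<le> a} \<nu> \<and> (\<forall>b\<in>B. b \<le> a \<longrightarrow> \<nu> b = 0 \<longrightarrow> b = pbot B)}"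
  have LB: "?Loc \<subseteq> B" by blast
  let ?t = "pjoin B ?Loc"
  have tB: "?t \<in> B" using b.J_in LB .
  have tS: "?t \<in> S" using tB B_sub by blast
  have "?t = ptop S"
  proof (rule ccontr)
    assume nt: "?t \<noteq> ptop S"
    let ?t' = "pneg S ?t"
    have t'S: "?t' \<in> S" by (rule pneg_in)
    have "?t' \<noteq> pbot S"
    proof
      assume "?t' = pbot S"
      hence "pneg S ?t' = ptop S" using neg_bot by simp
      thus False using nn_B tB nt by simp
    qed
    then obtain \<nu> where nu: "cont_valuation S \<nu>" "normal_valuation S \<nu>" "\<nu> ?t' \<noteq> 0"
      using hv t'S by blast
    note v = cvD[OF nu(1)]
    have nrm: "\<And>x. x \<in> S \<Longrightarrow> \<nu> (pneg S (pneg S x)) = \<nu> x" using nu(2) unfolding normal_valuation_def by blast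
    let ?N = "{c\<in>B. \<nu> c = 0}"
    have NS: "?N \<subseteq> S" using B_sub by blast
    have bN: "pbot S \<in> ?N" using bot_B v(2) by blast
    have jN: "pjoin2 S c d \<in> ?N" if "c \<in> ?N" "d \<in> ?N" for c d
    proof -
      have cd: "c \<in> S" "d \<in> S" "\<nu> c = 0" "\<nu> d = 0" "c \<in> B" "d \<in> B" using that B_sub by auto
      have "\<nu> (pjoin2 S c d) + \<nu> (pmeet2 S c d) = 0" using v(3) cd by simp
      moreover have "0 \<le> \<nu> (pjoin2 S c d)" "0 \<le> \<nu> (pmeet2 S c d)" using v(1) j2_in m2_in cd by auto
      ultimately have "\<nu> (pjoin2 S c d) = 0" by linarith
      thus ?thesis using join_B cd by blast
    qed
    have Ndir: "directed_in S ?N" unfolding directed_in_def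
    proof (intro conjI ballI)
      show "?N \<subseteq> S" by fact
      show "?N \<noteq> {}" using bN by blast
      fix a b assume "a \<in> ?N" "b \<in> ?N"
      moreover hence "a \<le> pjoin2 S a b" "b \<le> pjoin2 S a b" using j2_ub1 j2_ub2 NS by blast+
      ultimately show "\<exists>c\<in>?N. a \<le> c \<and> b \<le> c" using jN by blast
    qed
    let ?n = "pjoin S ?N"
    have nS: "?n \<in> S" using J_in NS .
    have "\<nu> ?n = (SUP c\<in>?N. \<nu> c)" using v(5) Ndir by blast
    also have "\<dots> = (SUP c\<in>?N. 0)" by (rule SUP_cong) auto
    also have "\<dots> = 0" using bN by (intro cSUP_const) blast
    finally have nu_n: "\<nu> ?n = 0" .
    let ?s = "pneg S ?n"
    have sB: "?s \<in> B" using neg_B nS by blast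
    have sS: "?s \<in> S" by (rule pneg_in)
    let ?Ls = "{b\<in>B. b \<le> ?s}"
    note f = sub_dn_facts[OF sB]
    have cv: "cont_valuation ?Ls \<nu>"
    proof (rule cvI)
      show "\<And>x. x \<in> ?Ls \<Longrightarrow> 0 \<le> \<nu> x" using v(1) B_sub by blast
      show "\<nu> (pbot ?Ls) = 0" using f(3) v(2) by simp
      show "\<And>a b. a \<in> ?Ls \<Longrightarrow> b \<in> ?Ls \<Longrightarrow> \<nu> (pjoin2 ?Ls a b) + \<nu> (pmeet2 ?Ls a b) = \<nu> a + \<nu> b"
      proof -
        fix a b assume ab: "a \<in> ?Ls" "b \<in> ?Ls"
        hence "a \<in> S" "b \<in> S" using B_sub by auto
        thus "\<nu> (pjoin2 ?Ls a b) + \<nu> (pmeet2 ?Ls a b) = \<nu> a + \<nu> b" using f(1)[OF ab] f(2)[OF ab] v(3) by simp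
      qed
      show "\<And>a b. a \<in> ?Ls \<Longrightarrow> b \<in> ?Ls \<Longrightarrow> a \<le> b \<Longrightarrow> \<nu> a \<le> \<nu> b" using v(4) B_sub by blast
      fix D assume D: "directed_in ?Ls D"
      note d = directed_inD[OF D]
      have DS: "D \<subseteq> S" using d(1) B_sub by blast
      have DdS: "directed_in S D" unfolding directed_in_def using DS d by blast
      have "\<nu> (pjoin ?Ls D) = \<nu> (pneg S (pneg S (pjoin S D)))" using f(4) d(1) by simp
      also have "\<dots> = \<nu> (pjoin S D)" using nrm J_in DS by blast
      also have "\<dots> = (SUP d\<in>D. \<nu> d)" using v(5) DdS by blast
      finally show "\<nu> (pjoin ?Ls D) = (SUP d\<in>D. \<nu> d)" .
    qed
    have faith: "\<forall>b\<in>B. b \<le> ?s \<longrightarrow> \<nu> b = 0 \<longrightarrow> b = pbot B"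
    proof (intro ballI impI)
      fix c assume c: "c \<in> B" "c \<le> ?s" "\<nu> c = 0"
      have cS: "c \<in> S" using c B_sub by blast
      have "c \<le> ?n" using J_ub NS c by blast
      hence "c \<le> pmeet2 S ?n ?s" using le_m2_iff c cS nS sS by blast
      also have "\<dots> = pbot S" using pneg_meet' nS by blast
      finally show "c = pbot B" using B_bot le_bot_iff cS by simp
    qed
    have "?s \<in> ?Loc" using sB cv faith by blast
    hence st: "?s \<le> ?t" using b.J_ub LB by blast
    have "pmeet2 S ?t' ?s \<le> pmeet2 S ?t' ?t" using st t'S sS tS by (intro m2_mono) auto
    also have "\<dots> = pbot S" using pneg_meet tS by blast
    finally have "pmeet2 S ?t' ?s = pbot S" using le_bot_iff m2_in t'S sS by blast
    hence "?t' \<le> pneg S ?s" using pneg_char t'S sS by blast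
    hence "\<nu> ?t' \<le> \<nu> (pneg S ?s)" using v(4) t'S pneg_in by blast
    also have "\<nu> (pneg S ?s) = 0" using nrm nS nu_n by simp
    finally have "\<nu> ?t' \<le> 0" .
    thus False using v(1) t'S nu(3) by force
  qed
  hence "ptop B = pjoin B ?Loc" using B_top by simp
  moreover have "complete_bool_alg B" using cba_iff B_cba by blast
  ultimately show ?thesis unfolding localizable_def by blast
qed

end

lemma hyper_ston: "hyperstonean S \<Longrightarrow> ston S"
  unfolding hyperstonean_def using stonean_ston by blast

lemma hyper_loc: assumes "hyperstonean S" shows "localizable (COpen S)"
proof -
  interpret ston S using hyper_ston assms by blast
  show ?thesis using ston_localizable assms unfolding hyperstonean_def by blast
qed

lemma loc_cba: "localizable A \<Longrightarrow> cba A"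
  unfolding localizable_def using cba_iff by blast

lemma part3: assumes "hyperstonean H"
  shows "bij_betw (pjoin H) (Idl (COpen H)) H \<and> frame_hom (Idl (COpen H)) H (pjoin H)"
proof -
  interpret ston H using hyper_ston assms by blast
  show ?thesis using Phi_oiso Phi_open unfolding oiso_def open_frame_hom_def by blast
qed

lemma part4: assumes "localizable A"
  shows "bij_betw (\<lambda>a. {b\<in>A. b \<le> a}) A (COpen (Idl A)) \<and>
      bool_hom_sup A (COpen (Idl A)) (\<lambda>a. {b\<in>A. b \<le> a})"
proof -
  interpret cba A using loc_cba assms by blast
  have e: "(\<lambda>a. {b\<in>A. b \<le> a}) = dn" unfolding dn_def by (rule ext) simp
  show ?thesis unfolding e using dn_oiso oiso_bool_hom[OF dn_oiso cpl] unfolding oiso_def by blast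
qed

locale sthom = S1: ston H' + S2: ston H for H' :: "'c::order set" and H :: "'a::order set"
begin

lemma part5: assumes f: "open_frame_hom H' H fs" shows "bool_hom_sup (COpen H') (COpen H) fs"
proof -
  note F = ofhD[OF f]
  have fbot: "fs (pbot H') = pbot H" unfolding pbot_def using F(4)[of "{}"] by simp
  have fneg: "fs (pneg H' x) = pneg H (fs x)" if "x \<in> H'" for x
    unfolding pneg_def using F(6) that S1.bot_in fbot by simp
  have fj2: "fs (pjoin2 H' a b) = pjoin2 H (fs a) (fs b)" if "a \<in> H'" "b \<in> H'" for a b
    unfolding pjoin2_def using F(4)[of "{a,b}"] that by simp
  have inB: "fs c \<in> COpen H" if c: "c \<in> COpen H'" for c
  proof -
    have "S1.compl c" using c S1.COpen_compl by blast
    then obtain d where d: "c \<in> H'" "d \<in> H'" "pmeet2 H' c d = pbot H'" "pjoin2 H' c d = ptop H'"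
      unfolding S1.compl_def by blast
    have "pmeet2 H (fs c) (fs d) = pbot H" using F(3) d fbot by metis
    moreover have "pjoin2 H (fs c) (fs d) = ptop H" using fj2 d F(2) by metis
    ultimately have "S2.compl (fs c)" unfolding S2.compl_def using F(1) d by blast
    thus ?thesis using S2.COpen_compl by blast
  qed
  show ?thesis unfolding bool_hom_sup_def
  proof (intro conjI ballI allI impI)
    show "\<And>a. a \<in> COpen H' \<Longrightarrow> fs a \<in> COpen H" using inB by blast
    show "fs (ptop (COpen H')) = ptop (COpen H)" using S1.B_top S2.B_top F(2) by simp
    show "fs (pbot (COpen H')) = pbot (COpen H)" using S1.B_bot S2.B_bot fbot by simp
    fix a b assume ab: "a \<in> COpen H'" "b \<in> COpen H'"
    have abS: "a \<in> H'" "b \<in> H'" using ab S1.B_sub by auto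
    show "fs (pmeet2 (COpen H') a b) = pmeet2 (COpen H) (fs a) (fs b)"
      using S1.B_m2 S2.B_m2 ab inB F(3) abS by simp
    show "fs (pjoin2 (COpen H') a b) = pjoin2 (COpen H) (fs a) (fs b)"
      using S1.B_j2 S2.B_j2 ab inB fj2 abS by simp
  next
    fix X assume X: "X \<subseteq> COpen H'"
    have XS: "X \<subseteq> H'" using X S1.B_sub by blast
    have fX: "fs ` X \<subseteq> COpen H" using inB X by blast
    have "fs (pjoin (COpen H') X) = fs (pneg H' (pneg H' (pjoin H' X)))" using S1.B_join X by simp
    also have "\<dots> = pneg H (pneg H (fs (pjoin H' X)))" using fneg S1.pneg_in S1.J_in XS by simp
    also have "\<dots> = pneg H (pneg H (pjoin H (fs ` X)))" using F(4) XS by simp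
    also have "\<dots> = pjoin (COpen H) (fs ` X)" using S2.B_join fX by simp
    finally show "fs (pjoin (COpen H') X) = pjoin (COpen H) (fs ` X)" .
  qed
qed

lemma part6: assumes g: "bool_hom_sup (COpen H') (COpen H) g"
  shows "\<exists>fs. open_frame_hom H' H fs \<and> (\<forall>c\<in>COpen H'. fs c = g c) \<and>
         (\<forall>fs'. open_frame_hom H' H fs' \<and> (\<forall>c\<in>COpen H'. fs' c = g c) \<longrightarrow>
            (\<forall>x\<in>H'. fs' x = fs x))"
proof -
  interpret c: chom "COpen H'" "COpen H" g
    unfolding chom_def chom_axioms_def using S1.B_cba S2.B_cba g by blast
  define fs where "fs x = pjoin H (ideal_map (COpen H') (COpen H) g (S1.Psi x))" for x
  have o1: "open_frame_hom H' H (\<lambda>x. pjoin H (ideal_map (COpen H') (COpen H) g (S1.Psi x)))"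
    using open_compose[OF open_compose[OF S1.Psi_open c.ideal_map_open] S2.Phi_open] by simp
  hence o: "open_frame_hom H' H fs" unfolding fs_def[abs_def] .
  have agree: "fs c = g c" if c: "c \<in> COpen H'" for c
  proof -
    have PI: "S1.Psi c \<in> Idl (COpen H')" using S1.Psi_ideal c S1.B_sub by blast
    have "c.D (S1.Psi c) = {b\<in>COpen H. b \<le> g c}"
    proof
      show "c.D (S1.Psi c) \<subseteq> {b\<in>COpen H. b \<le> g c}"
      proof
        fix b assume "b \<in> c.D (S1.Psi c)"
        then obtain i where i: "b \<in> COpen H" "i \<in> COpen H'" "i \<le> c" "b \<le> g i"
          unfolding c.D_def S1.Psi_def by blast
        have "g i \<le> g c" using c.hmono i c by blast
        thus "b \<in> {b\<in>COpen H. b \<le> g c}" using i order_trans by blast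
      qed
      show "{b\<in>COpen H. b \<le> g c} \<subseteq> c.D (S1.Psi c)"
        unfolding c.D_def S1.Psi_def using c by blast
    qed
    hence "fs c = pjoin H {b\<in>COpen H. b \<le> g c}" unfolding fs_def using c.ideal_map_D[OF PI] by simp
    also have "\<dots> = g c"
    proof (rule pjoin_max)
      show "g c \<in> H" using c.hin c S2.B_sub by blast
      show "g c \<in> {b\<in>COpen H. b \<le> g c}" using c.hin c by blast
    qed blast
    finally show ?thesis .
  qed
  have uniq: "\<forall>x\<in>H'. fs' x = fs x" if f': "open_frame_hom H' H fs'" "\<forall>c\<in>COpen H'. fs' c = g c" for fs'
  proof
    fix x assume x: "x \<in> H'"
    obtain C where C: "C \<subseteq> COpen H'" "x = pjoin H' C" using S1.coh x unfolding coherent_def by blast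
    have CS: "C \<subseteq> H'" using C S1.B_sub by blast
    have "fs' x = pjoin H (fs' ` C)" using ofhD(4)[OF f'(1) CS] C by simp
    also have "fs' ` C = fs ` C"
    proof (rule image_cong)
      fix c assume "c \<in> C"
      hence "c \<in> COpen H'" using C by blast
      thus "fs' c = fs c" using f'(2) agree by simp
    qed simp
    also have "pjoin H (fs ` C) = fs x" using ofhD(4)[OF o CS] C by simp
    finally show "fs' x = fs x" .
  qed
  show ?thesis using o agree uniq by blast
qed

end

lemma part7: assumes "localizable A" "localizable B" "bool_hom_sup A B h"
  shows "open_frame_hom (Idl A) (Idl B) (ideal_map A B h)"
proof -
  have c: "cba A" "cba B" using loc_cba assms(1,2) by auto
  have ax: "chom_axioms A B h" unfolding chom_axioms_def using assms(3) .
  interpret chom A B h by (rule chom.intro[OF c ax])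
  show ?thesis by (rule ideal_map_open)
qed

theorem mainTheorem9:
  shows "(\<forall>H::'a::order set. hyperstonean H \<longrightarrow> localizable (COpen H)) \<and>
   (\<forall>A::'b::order set. localizable A \<longrightarrow> hyperstonean (Idl A)) \<and>
   (\<forall>H::'a set. hyperstonean H \<longrightarrow>
      bij_betw (pjoin H) (Idl (COpen H)) H \<and> frame_hom (Idl (COpen H)) H (pjoin H)) \<and>
   (\<forall>A::'b set. localizable A \<longrightarrow>
      bij_betw (\<lambda>a. {b\<in>A. b \<le> a}) A (COpen (Idl A)) \<and>
      bool_hom_sup A (COpen (Idl A)) (\<lambda>a. {b\<in>A. b \<le> a})) \<and>
   (\<forall>(H::'a set) (H'::'c::order set) fs. hyperstonean H \<and> hyperstonean H' \<and>
      open_frame_hom H' H fs \<longrightarrow> bool_hom_sup (COpen H') (COpen H) fs) \<and>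
   (\<forall>(H::'a set) (H'::'c set) g. hyperstonean H \<and> hyperstonean H' \<and>
      bool_hom_sup (COpen H') (COpen H) g \<longrightarrow>
      (\<exists>fs. open_frame_hom H' H fs \<and> (\<forall>c\<in>COpen H'. fs c = g c) \<and>
         (\<forall>fs'. open_frame_hom H' H fs' \<and> (\<forall>c\<in>COpen H'. fs' c = g c) \<longrightarrow>
            (\<forall>x\<in>H'. fs' x = fs x)))) \<and>
   (\<forall>(A::'b set) (B::'d::order set) h. localizable A \<and> localizable B \<and>
      bool_hom_sup A B h \<longrightarrow> open_frame_hom (Idl A) (Idl B) (ideal_map A B h))"
proof (intro conjI allI impI)
  show "\<And>H::'a set. hyperstonean H \<Longrightarrow> localizable (COpen H)" using hyper_loc by blast
  show "\<And>A::'b set. localizable A \<Longrightarrow> hyperstonean (Idl A)"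
  proof -
    fix A :: "'b set" assume la: "localizable A"
    interpret cba A using loc_cba la by blast
    show "hyperstonean (Idl A)" using loc_hyper la by blast
  qed
  show "\<And>H::'a set. hyperstonean H \<Longrightarrow> bij_betw (pjoin H) (Idl (COpen H)) H"
    using part3 by blast
  show "\<And>H::'a set. hyperstonean H \<Longrightarrow> frame_hom (Idl (COpen H)) H (pjoin H)"
    using part3 by blast
  show "\<And>A::'b set. localizable A \<Longrightarrow> bij_betw (\<lambda>a. {b\<in>A. b \<le> a}) A (COpen (Idl A))"
    using part4 by blast
  show "\<And>A::'b set. localizable A \<Longrightarrow> bool_hom_sup A (COpen (Idl A)) (\<lambda>a. {b\<in>A. b \<le> a})"
    using part4 by blast
  show "\<And>(H::'a set) (H'::'c set) fs. hyperstonean H \<and> hyperstonean H' \<and> open_frame_hom H' H fs \<Longrightarrow>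
      bool_hom_sup (COpen H') (COpen H) fs"
  proof -
    fix H :: "'a set" and H' :: "'c set" and fs
    assume a: "hyperstonean H \<and> hyperstonean H' \<and> open_frame_hom H' H fs"
    have hs: "ston H'" "ston H" using a hyper_ston by auto
    interpret sthom H' H by (rule sthom.intro[OF hs])
    show "bool_hom_sup (COpen H') (COpen H) fs" using part5 a by blast
  qed
  show "\<And>(H::'a set) (H'::'c set) g. hyperstonean H \<and> hyperstonean H' \<and> bool_hom_sup (COpen H') (COpen H) g \<Longrightarrow>
      \<exists>fs. open_frame_hom H' H fs \<and> (\<forall>c\<in>COpen H'. fs c = g c) \<and>
         (\<forall>fs'. open_frame_hom H' H fs' \<and> (\<forall>c\<in>COpen H'. fs' c = g c) \<longrightarrow> (\<forall>x\<in>H'. fs' x = fs x))"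
  proof -
    fix H :: "'a set" and H' :: "'c set" and g
    assume a: "hyperstonean H \<and> hyperstonean H' \<and> bool_hom_sup (COpen H') (COpen H) g"
    have hs: "ston H'" "ston H" using a hyper_ston by auto
    interpret sthom H' H by (rule sthom.intro[OF hs])
    show "\<exists>fs. open_frame_hom H' H fs \<and> (\<forall>c\<in>COpen H'. fs c = g c) \<and>
         (\<forall>fs'. open_frame_hom H' H fs' \<and> (\<forall>c\<in>COpen H'. fs' c = g c) \<longrightarrow> (\<forall>x\<in>H'. fs' x = fs x))"
      using part6 a by blast
  qed
  show "\<And>(A::'b set) (B::'d set) h. localizable A \<and> localizable B \<and> bool_hom_sup A B h \<Longrightarrow>
      open_frame_hom (Idl A) (Idl B) (ideal_map A B h)"
    using part7 by blast
qed


end
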